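(* Let $T$ be a tree of diameter $d$ on $n$ vertices with maximum Wiener index. Let $x$ be a special vertex of $T$ and let $T_1,T_2$ be components of $T-x$ such that each of them contains exactly one broom vertex of $T$ and $d(y,y')<d$ for all leaves $y\in V(T_1)$, $y'\in V(T_2)$. Let $y_1\in V(T_1)$, $y_2\in V(T_2)$ be leaves of $T$, $y_1'$ the broom vertex adjacent to $y_1$, $p=d(x,y_1)=d(x,y_2)$, and $t_i$ the number of leaves of $T$ in $T_i$ ($i\in\{1,2\}$). Let $T'=T_2\xrightarrow{T} y_1'$. If $t_1=t_2$, then $W(T)\geq W(T')$ if and only if $$t_1\geq \sqrt{\frac{p(3n+2p-7)}{12}}-p+1.$$
   Context: All graphs are finite and simple; $d(u,v)$ denotes distance and $W(G)=\sum_{\{u,v\}\subseteq V(G)} d(u,v)$ is the Wiener index. A tree $T$ of order $n$ and diameter $d$ has maximum Wiener index if $W(T')\leq W(T)$ for every tree $T'$ of order $n$ and diameter $d$. A leaf is a vertex of degree $1$; a broom vertex of $T$ is a vertex adjacent to a leaf of $T$. A vertex $x$ of a tree $T$ of diameter $d$ is special if $\deg(x)\geq 3$ and there exist components $T_1,T_2$ of $T-x$ such that each contains exactly one broom vertex of $T$ and $d(y,y')<d$ for all leaves $y\in V(T_1)$, $y'\in V(T_2)$. For such $x,T_1,T_2$ and the broom vertex $y_1'$ of $T_1$, the tree $T_2\xrightarrow{T} y_1'$ is obtained from $T$ by deleting all vertices of $T_2$ and attaching $|V(T_2)|$ new leaves to $y_1'$. *)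

theory Defs
  imports Complex_Main
begin

definition is_walk :: "'a set \<Rightarrow> 'a set set \<Rightarrow> 'a list \<Rightarrow> bool" where
  "is_walk V E xs \<longleftrightarrow> xs \<noteq> [] \<and> set xs \<subseteq> V \<and>
     (\<forall>i < length xs - 1. {xs ! i, xs ! Suc i} \<in> E)"

definition simple_graph :: "'a set \<Rightarrow> 'a set set \<Rightarrow> bool" where
  "simple_graph V E \<longleftrightarrow> finite V \<and> (\<forall>e\<in>E. \<exists>u v. u \<in> V \<and> v \<in> V \<and> u \<noteq> v \<and> e = {u, v})"

definition graph_connected :: "'a set \<Rightarrow> 'a set set \<Rightarrow> bool" where
  "graph_connected V E \<longleftrightarrow>
     (\<forall>u\<in>V. \<forall>v\<in>V. \<exists>xs. is_walk V E xs \<and> hd xs = u \<and> last xs = v)"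

definition has_cycle :: "'a set \<Rightarrow> 'a set set \<Rightarrow> bool" where
  "has_cycle V E \<longleftrightarrow>
     (\<exists>xs. is_walk V E xs \<and> distinct xs \<and> length xs \<ge> 3 \<and> {last xs, hd xs} \<in> E)"

definition is_tree :: "'a set \<Rightarrow> 'a set set \<Rightarrow> bool" where
  "is_tree V E \<longleftrightarrow> simple_graph V E \<and> V \<noteq> {} \<and> graph_connected V E \<and> \<not> has_cycle V E"

definition gdist :: "'a set \<Rightarrow> 'a set set \<Rightarrow> 'a \<Rightarrow> 'a \<Rightarrow> nat" where
  "gdist V E u v = (LEAST k. \<exists>xs. is_walk V E xs \<and> hd xs = u \<and> last xs = v \<and> length xs = Suc k)"

definition diameter :: "'a set \<Rightarrow> 'a set set \<Rightarrow> nat" where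
  "diameter V E = Max {gdist V E u v | u v. u \<in> V \<and> v \<in> V}"

text \<open>Wiener index: sum of distances over unordered pairs of distinct vertices
  (the ordered double sum counts each unordered pair twice, diagonal terms are 0).\<close>
definition wiener :: "'a set \<Rightarrow> 'a set set \<Rightarrow> nat" where
  "wiener V E = (\<Sum>u\<in>V. \<Sum>v\<in>V. gdist V E u v) div 2"

definition max_wiener_tree :: "'a set \<Rightarrow> 'a set set \<Rightarrow> bool" where
  "max_wiener_tree V E \<longleftrightarrow> is_tree V E \<and>
     (\<forall>(V'::'a set) (E'::'a set set). is_tree V' E' \<and> card V' = card V \<and> diameter V' E' = diameter V E
        \<longrightarrow> wiener V' E' \<le> wiener V E)"

definition degree :: "'a set \<Rightarrow> 'a set set \<Rightarrow> 'a \<Rightarrow> nat" where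
  "degree V E v = card {u \<in> V. {u, v} \<in> E}"

definition is_leaf :: "'a set \<Rightarrow> 'a set set \<Rightarrow> 'a \<Rightarrow> bool" where
  "is_leaf V E v \<longleftrightarrow> v \<in> V \<and> degree V E v = 1"

definition is_broom :: "'a set \<Rightarrow> 'a set set \<Rightarrow> 'a \<Rightarrow> bool" where
  "is_broom V E v \<longleftrightarrow> v \<in> V \<and> (\<exists>y. is_leaf V E y \<and> {v, y} \<in> E)"

definition is_component :: "'a set \<Rightarrow> 'a set set \<Rightarrow> 'a set \<Rightarrow> bool" where
  "is_component S F C \<longleftrightarrow>
     (\<exists>v\<in>S. C = {u. \<exists>xs. is_walk S F xs \<and> hd xs = v \<and> last xs = u})"

definition comp_minus :: "'a set \<Rightarrow> 'a set set \<Rightarrow> 'a \<Rightarrow> 'a set \<Rightarrow> bool" where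
  "comp_minus V E x C \<longleftrightarrow> is_component (V - {x}) {e \<in> E. x \<notin> e} C"

definition special_pair :: "'a set \<Rightarrow> 'a set set \<Rightarrow> 'a \<Rightarrow> 'a set \<Rightarrow> 'a set \<Rightarrow> bool" where
  "special_pair V E x T1 T2 \<longleftrightarrow>
     T1 \<noteq> T2 \<and> comp_minus V E x T1 \<and> comp_minus V E x T2 \<and>
     card {b \<in> T1. is_broom V E b} = 1 \<and> card {b \<in> T2. is_broom V E b} = 1 \<and>
     (\<forall>y\<in>T1. \<forall>y'\<in>T2. is_leaf V E y \<longrightarrow> is_leaf V E y' \<longrightarrow> gdist V E y y' < diameter V E)"

definition is_special :: "'a set \<Rightarrow> 'a set set \<Rightarrow> 'a \<Rightarrow> bool" where
  "is_special V E x \<longleftrightarrow> x \<in> V \<and> degree V E x \<ge> 3 \<and> (\<exists>T1 T2. special_pair V E x T1 T2)"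

text \<open>The tree T2 -> y1': delete V(T2) and attach the new leaves L (|L| = |V(T2)|) to y1'.\<close>
definition move_verts :: "'a set \<Rightarrow> 'a set \<Rightarrow> 'a set \<Rightarrow> 'a set" where
  "move_verts V T2 L = (V - T2) \<union> L"

definition move_edges :: "'a set set \<Rightarrow> 'a set \<Rightarrow> 'a \<Rightarrow> 'a set \<Rightarrow> 'a set set" where
  "move_edges E T2 y L = {e \<in> E. e \<inter> T2 = {}} \<union> {{y, l} | l. l \<in> L}"

end

theory Submission
  imports Defs
begin



lemma walk_single[simp]: "is_walk V E [a] \<longleftrightarrow> a \<in> V"
  by (auto simp: is_walk_def)

lemma walk_Nil[simp]: "\<not> is_walk V E []"
  by (auto simp: is_walk_def)

lemma walk_Cons2[simp]:
  "is_walk V E (a # b # xs) \<longleftrightarrow> a \<in> V \<and> {a,b} \<in> E \<and> is_walk V E (b # xs)"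
proof
  assume h: "is_walk V E (a # b # xs)"
  have "{a,b} \<in> E" using h unfolding is_walk_def by (metis length_Cons nth_Cons_0 nth_Cons_Suc zero_less_Suc zero_less_diff One_nat_def diff_Suc_1 less_Suc_eq_0_disj)
  moreover have "is_walk V E (b # xs)" unfolding is_walk_def
  proof (intro conjI allI impI)
    show "set (b # xs) \<subseteq> V" using h by (auto simp: is_walk_def)
    fix i assume "i < length (b # xs) - 1"
    then have "Suc i < length (a # b # xs) - 1" by simp
    with h have "{(a # b # xs) ! Suc i, (a # b # xs) ! Suc (Suc i)} \<in> E" unfolding is_walk_def by blast
    then show "{(b # xs) ! i, (b # xs) ! Suc i} \<in> E" by simp
  qed simp
  ultimately show "a \<in> V \<and> {a,b} \<in> E \<and> is_walk V E (b # xs)" using h by (auto simp: is_walk_def)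
next
  assume h: "a \<in> V \<and> {a,b} \<in> E \<and> is_walk V E (b # xs)"
  show "is_walk V E (a # b # xs)" unfolding is_walk_def
  proof (intro conjI allI impI)
    show "set (a # b # xs) \<subseteq> V" using h by (auto simp: is_walk_def)
    fix i assume i: "i < length (a # b # xs) - 1"
    show "{(a # b # xs) ! i, (a # b # xs) ! Suc i} \<in> E"
    proof (cases i)
      case 0 then show ?thesis using h by simp
    next
      case (Suc j) then show ?thesis using h i unfolding is_walk_def by auto
    qed
  qed simp
qed

lemma walk_append_iff:
  "xs \<noteq> [] \<Longrightarrow> ys \<noteq> [] \<Longrightarrow>
   is_walk V E (xs @ ys) \<longleftrightarrow> is_walk V E xs \<and> is_walk V E ys \<and> {last xs, hd ys} \<in> E"
proof (induction xs)
  case Nil then show ?case by simp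
next
  case (Cons a xs)
  show ?case
  proof (cases xs)
    case Nil
    then show ?thesis using Cons.prems by (cases ys) auto
  next
    case (Cons b zs)
    then show ?thesis using Cons.IH Cons.prems by auto
  qed
qed

lemma walk_glue:
  assumes "is_walk V E xs" "is_walk V E ys" "last xs = hd ys"
  shows "is_walk V E (xs @ tl ys)"
proof (cases "tl ys = []")
  case True then show ?thesis using assms by simp
next
  case False
  have ys: "ys = [hd ys] @ tl ys" using assms(2) by (cases ys) auto
  have "{hd ys, hd (tl ys)} \<in> E" "is_walk V E (tl ys)"
    using walk_append_iff[of "[hd ys]" "tl ys" V E] assms(2) ys False by auto
  then show ?thesis using walk_append_iff[of xs "tl ys" V E] assms False by (cases xs) auto
qed

lemma walk_rev: "is_walk V E xs \<Longrightarrow> is_walk V E (rev xs)"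
proof (induction xs)
  case Nil then show ?case by simp
next
  case (Cons a xs)
  show ?case
  proof (cases xs)
    case Nil then show ?thesis using Cons by simp
  next
    case (Cons b zs)
    have "is_walk V E (rev xs)" using Cons.IH Cons.prems \<open>xs = b # zs\<close> by simp
    moreover have "{b, a} \<in> E" "a \<in> V" using Cons.prems \<open>xs = b # zs\<close> by (auto simp: insert_commute)
    ultimately show ?thesis using walk_append_iff[of "rev xs" "[a]" V E] \<open>xs = b # zs\<close> by simp
  qed
qed

lemma walk_take: assumes "is_walk V E xs" "0 < k" "k \<le> length xs" shows "is_walk V E (take k xs)"
proof (cases "k = length xs")
  case True then show ?thesis using assms by simp
next
  case False
  then have "take k xs \<noteq> []" "drop k xs \<noteq> []" using assms by auto
  then show ?thesis using walk_append_iff[of "take k xs" "drop k xs" V E] assms by simp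
qed

lemma walk_drop: assumes "is_walk V E xs" "k < length xs" shows "is_walk V E (drop k xs)"
proof (cases "k = 0")
  case True then show ?thesis using assms by simp
next
  case False
  then have "take k xs \<noteq> []" "drop k xs \<noteq> []" using assms by auto
  then show ?thesis using walk_append_iff[of "take k xs" "drop k xs" V E] assms by simp
qed

lemma walk_mono: "is_walk V E xs \<Longrightarrow> V \<subseteq> V' \<Longrightarrow> E \<subseteq> E' \<Longrightarrow> is_walk V' E' xs"
  unfolding is_walk_def by blast

lemma walk_distinct:
  "is_walk V E xs \<Longrightarrow> \<exists>ys. is_walk V E ys \<and> distinct ys \<and> hd ys = hd xs \<and> last ys = last xs"
proof (induction "length xs" arbitrary: xs rule: less_induct)
  case less
  show ?case
  proof (cases "distinct xs")
    case True then show ?thesis using less.prems by blast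
  next
    case False
    then obtain as y bs cs where xs: "xs = as @ [y] @ bs @ [y] @ cs"
      using not_distinct_decomp by blast
    define zs where "zs = as @ [y] @ cs"
    have w1: "is_walk V E (as @ [y])"
      using less.prems xs walk_append_iff[of "as @ [y]" "bs @ [y] @ cs" V E] by auto
    have w2: "is_walk V E ([y] @ cs)"
      using less.prems xs walk_append_iff[of "as @ [y] @ bs" "[y] @ cs" V E] by auto
    have "is_walk V E zs" unfolding zs_def
      using walk_glue[OF w1 w2] by simp
    moreover have "length zs < length xs" unfolding zs_def xs by simp
    moreover have "hd zs = hd xs" "last zs = last xs" unfolding zs_def xs
      by (cases as; simp)+
    ultimately show ?thesis using less.hyps by metis
  qed
qed




definition reach :: "'a set \<Rightarrow> 'a set set \<Rightarrow> 'a \<Rightarrow> 'a \<Rightarrow> bool" where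
  "reach V E u v \<longleftrightarrow> (\<exists>xs. is_walk V E xs \<and> hd xs = u \<and> last xs = v)"

lemma reachI: "is_walk V E xs \<Longrightarrow> hd xs = u \<Longrightarrow> last xs = v \<Longrightarrow> reach V E u v"
  unfolding reach_def by blast

lemma reach_refl: "u \<in> V \<Longrightarrow> reach V E u u"
  by (rule reachI[of V E "[u]"]) auto

lemma reach_edge: "{u,v} \<in> E \<Longrightarrow> u \<in> V \<Longrightarrow> v \<in> V \<Longrightarrow> reach V E u v"
  by (rule reachI[of V E "[u,v]"]) auto

lemma hd_rev': "xs \<noteq> [] \<Longrightarrow> hd (rev xs) = last xs"
  by (simp add: hd_rev)

lemma last_glue: "xs \<noteq> [] \<Longrightarrow> ys \<noteq> [] \<Longrightarrow> last xs = hd ys \<Longrightarrow> last (xs @ tl ys) = last ys"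
  by (cases ys) auto

lemma hd_glue: "xs \<noteq> [] \<Longrightarrow> hd (xs @ tl ys) = hd xs"
  by (cases xs) auto

lemma reach_sym: "reach V E u v \<Longrightarrow> reach V E v u"
  unfolding reach_def
proof (elim exE conjE)
  fix xs assume "is_walk V E xs" "hd xs = u" "last xs = v"
  moreover then have "xs \<noteq> []" by auto
  ultimately show "\<exists>xs. is_walk V E xs \<and> hd xs = v \<and> last xs = u"
    by (intro exI[of _ "rev xs"]) (simp add: walk_rev hd_rev last_rev)
qed

lemma reach_trans: "reach V E u v \<Longrightarrow> reach V E v w \<Longrightarrow> reach V E u w"
  unfolding reach_def
proof (elim exE conjE)
  fix xs ys assume a: "is_walk V E xs" "hd xs = u" "last xs = v" "is_walk V E ys" "hd ys = v" "last ys = w"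
  then have "is_walk V E (xs @ tl ys)" by (intro walk_glue) auto
  moreover have "xs \<noteq> []" "ys \<noteq> []" using a by auto
  moreover have "hd (xs @ tl ys) = u" using a hd_glue calculation by metis
  moreover have "last (xs @ tl ys) = w" using a last_glue calculation by metis
  ultimately show "\<exists>xs. is_walk V E xs \<and> hd xs = u \<and> last xs = w" by blast
qed

lemma reach_in: "reach V E u v \<Longrightarrow> u \<in> V \<and> v \<in> V"
  unfolding reach_def is_walk_def by (metis hd_in_set last_in_set subsetD)

lemma gdist_le:
  assumes "is_walk V E xs" "hd xs = u" "last xs = v"
  shows "gdist V E u v \<le> length xs - 1"
proof -
  have "xs \<noteq> []" using assms by auto
  then have "length xs = Suc (length xs - 1)" by simp
  then show ?thesis unfolding gdist_def using assms by (intro Least_le) blast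
qed

lemma gdist_walk:
  assumes "reach V E u v"
  shows "\<exists>xs. is_walk V E xs \<and> hd xs = u \<and> last xs = v \<and> length xs = Suc (gdist V E u v)"
proof -
  obtain xs where xs: "is_walk V E xs" "hd xs = u" "last xs = v" using assms unfolding reach_def by blast
  then have "xs \<noteq> []" by auto
  then have "\<exists>k xs. is_walk V E xs \<and> hd xs = u \<and> last xs = v \<and> length xs = Suc k"
    using xs by (intro exI[of _ "length xs - 1"] exI[of _ xs]) simp
  then show ?thesis unfolding gdist_def by (rule LeastI_ex)
qed

lemma gdist_sym: "gdist V E u v = gdist V E v u"
proof -
  have "\<And>u v k. (\<exists>xs. is_walk V E xs \<and> hd xs = u \<and> last xs = v \<and> length xs = Suc k) \<Longrightarrow>
     (\<exists>xs. is_walk V E xs \<and> hd xs = v \<and> last xs = u \<and> length xs = Suc k)"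
  proof (elim exE conjE)
    fix u v k xs assume "is_walk V E xs" "hd xs = u" "last xs = v" "length xs = Suc k"
    then show "\<exists>xs. is_walk V E xs \<and> hd xs = v \<and> last xs = u \<and> length xs = Suc k"
      by (intro exI[of _ "rev xs"]) (auto simp: walk_rev hd_rev last_rev)
  qed
  note imp = this
  have eq: "\<And>k. (\<exists>xs. is_walk V E xs \<and> hd xs = u \<and> last xs = v \<and> length xs = Suc k) =
             (\<exists>xs. is_walk V E xs \<and> hd xs = v \<and> last xs = u \<and> length xs = Suc k)"
    by (rule iffI; rule imp; assumption)
  show ?thesis unfolding gdist_def by (simp only: eq)
qed

lemma gdist_triangle:
  assumes "reach V E u v" "reach V E v w"
  shows "gdist V E u w \<le> gdist V E u v + gdist V E v w"
proof -
  obtain xs where a: "is_walk V E xs" "hd xs = u" "last xs = v" "length xs = Suc (gdist V E u v)"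
    using gdist_walk[OF assms(1)] by blast
  obtain ys where b: "is_walk V E ys" "hd ys = v" "last ys = w" "length ys = Suc (gdist V E v w)"
    using gdist_walk[OF assms(2)] by blast
  have w: "is_walk V E (xs @ tl ys)" using a b by (intro walk_glue) auto
  have ne: "xs \<noteq> []" "ys \<noteq> []" using a b by auto
  have h: "hd (xs @ tl ys) = u" using a hd_glue ne by metis
  have l: "last (xs @ tl ys) = w" using a b last_glue ne by metis
  have "gdist V E u w \<le> length (xs @ tl ys) - 1" by (rule gdist_le[OF w h l])
  then show ?thesis using a b by simp
qed

lemma gdist_refl: "u \<in> V \<Longrightarrow> gdist V E u u = 0"
  using gdist_le[of V E "[u]" u u] by simp

lemma gdist_0: "reach V E u v \<Longrightarrow> gdist V E u v = 0 \<Longrightarrow> u = v"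
  using gdist_walk[of V E u v] by (auto simp: length_Suc_conv)

lemma gdist_edge: "{u,v} \<in> E \<Longrightarrow> u \<in> V \<Longrightarrow> v \<in> V \<Longrightarrow> gdist V E u v \<le> 1"
  using gdist_le[of V E "[u,v]" u v] by simp

lemma pred_exists:
  assumes "reach V E u v" "u \<noteq> v"
  shows "\<exists>z. {z,v} \<in> E \<and> z \<in> V \<and> reach V E u z \<and> gdist V E u z + 1 = gdist V E u v"
proof -
  obtain P where P: "is_walk V E P" "hd P = u" "last P = v" "length P = Suc (gdist V E u v)"
    using gdist_walk[OF assms(1)] by blast
  have "length P \<noteq> 1" using P assms(2) by (auto simp: length_Suc_conv)
  then have "length P \<ge> 2" using P by simp
  define B where "B = butlast P"
  have PB: "P = B @ [v]" unfolding B_def using P by (metis append_butlast_last_id walk_Nil)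
  have "B \<noteq> []" using \<open>length P \<ge> 2\<close> PB by auto
  then have wB: "is_walk V E B" and e: "{last B, v} \<in> E" using walk_append_iff[of B "[v]" V E] P PB by auto
  have hB: "hd B = u" using P PB \<open>B \<noteq> []\<close> by (cases B) auto
  have "gdist V E u (last B) \<le> length B - 1" using gdist_le[OF wB hB] by simp
  moreover have rz: "reach V E u (last B)" using wB hB by (intro reachI) auto
  moreover have "last B \<in> V" using wB \<open>B \<noteq> []\<close> unfolding is_walk_def by auto
  moreover have "gdist V E u v \<le> gdist V E u (last B) + gdist V E (last B) v"
    using gdist_triangle[OF rz reach_edge[OF e]] \<open>last B \<in> V\<close> P reach_in[OF assms(1)] by auto
  moreover have "gdist V E (last B) v \<le> 1" using gdist_edge[OF e] \<open>last B \<in> V\<close> reach_in[OF assms(1)] by auto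
  moreover have "length B = gdist V E u v" using PB P by simp
  moreover have "gdist V E u v \<noteq> 0" using gdist_0[OF assms(1)] assms(2) by blast
  ultimately show ?thesis using e by (intro exI[of _ "last B"]) auto
qed

lemma leaf_dist:
  assumes "{l,b} \<in> E" "\<And>w. {l,w} \<in> E \<Longrightarrow> w = b" "reach V E l v" "v \<noteq> l" "l \<in> V" "b \<in> V"
  shows "gdist V E l v = gdist V E b v + 1"
proof -
  have rv: "reach V E v l" using assms(3) by (rule reach_sym)
  obtain z where z: "{z,l} \<in> E" "z \<in> V" "reach V E v z" "gdist V E v z + 1 = gdist V E v l"
    using pred_exists[OF rv assms(4)] by blast
  have "z = b" using assms(2) z(1) by (simp add: insert_commute)
  then show ?thesis using z gdist_sym by metis
qed

lemma map_walk:
  assumes "is_walk V E xs" "\<And>a. a \<in> V \<Longrightarrow> f a \<in> V'"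
    "\<And>a b. {a,b} \<in> E \<Longrightarrow> a \<in> V \<Longrightarrow> b \<in> V \<Longrightarrow> f a = f b \<or> {f a, f b} \<in> E'"
  shows "\<exists>ys. is_walk V' E' ys \<and> hd ys = f (hd xs) \<and> last ys = f (last xs) \<and> length ys \<le> length xs"
  using assms(1)
proof (induction xs)
  case Nil then show ?case by simp
next
  case (Cons a xs)
  show ?case
  proof (cases xs)
    case Nil then show ?thesis using Cons.prems assms(2) by (intro exI[of _ "[f a]"]) auto
  next
    case (Cons c zs)
    have h: "a \<in> V" "{a,c} \<in> E" "is_walk V E xs" using Cons.prems Cons by auto
    have "c \<in> V" using h(3) Cons unfolding is_walk_def by auto
    obtain ys where ys: "is_walk V' E' ys" "hd ys = f c" "last ys = f (last xs)" "length ys \<le> length xs"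
      using Cons.IH h(3) Cons by auto
    have "ys \<noteq> []" using ys by auto
    show ?thesis
    proof (cases "f a = f c")
      case True then show ?thesis using ys Cons by (intro exI[of _ ys]) auto
    next
      case False
      then have "{f a, f c} \<in> E'" using assms(3)[OF h(2) h(1) \<open>c \<in> V\<close>] by auto
      then have "is_walk V' E' (f a # ys)" using ys assms(2)[OF h(1)] \<open>ys \<noteq> []\<close>
        by (cases ys) auto
      then show ?thesis using ys \<open>ys \<noteq> []\<close> Cons by (intro exI[of _ "f a # ys"]) auto
    qed
  qed
qed

lemma map_dist:
  assumes "reach V E u v" "\<And>a. a \<in> V \<Longrightarrow> f a \<in> V'"
    "\<And>a b. {a,b} \<in> E \<Longrightarrow> a \<in> V \<Longrightarrow> b \<in> V \<Longrightarrow> f a = f b \<or> {f a, f b} \<in> E'"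
  shows "reach V' E' (f u) (f v) \<and> gdist V' E' (f u) (f v) \<le> gdist V E u v"
proof -
  obtain xs where xs: "is_walk V E xs" "hd xs = u" "last xs = v" "length xs = Suc (gdist V E u v)"
    using gdist_walk[OF assms(1)] by blast
  obtain ys where ys: "is_walk V' E' ys" "hd ys = f u" "last ys = f v" "length ys \<le> length xs"
    using map_walk[of V E xs f V' E'] xs(1) assms(2,3) xs by auto
  show ?thesis using gdist_le[OF ys(1-3)] ys xs reachI[OF ys(1-3)] by auto
qed




lemma tl_rev_eq: "tl (rev xs) = rev (butlast xs)"
  by (induction xs) (auto simp: tl_append split: list.splits)

lemma set_tl_sub: "set (tl xs) \<subseteq> set xs"
  by (cases xs) auto

lemma in_butlast_nth: "v \<in> set (butlast P) \<Longrightarrow> \<exists>i. i < length P - 1 \<and> P ! i = v"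
  by (auto simp: in_set_conv_nth nth_butlast)

lemma in_tl_nth: "v \<in> set (tl P) \<Longrightarrow> \<exists>i. 0 < i \<and> i < length P \<and> P ! i = v"
  by (cases P) (auto simp: in_set_conv_nth)

locale tree =
  fixes V :: "'a set" and E :: "'a set set"
  assumes tree: "is_tree V E"
begin

abbreviation d where "d \<equiv> gdist V E"

lemma finV: "finite V" using tree by (simp add: is_tree_def simple_graph_def)

lemma edge_in: "{a,b} \<in> E \<Longrightarrow> a \<in> V \<and> b \<in> V \<and> a \<noteq> b"
proof -
  assume "{a,b} \<in> E"
  then obtain u v where "u \<in> V" "v \<in> V" "u \<noteq> v" "{a,b} = {u,v}"
    using tree unfolding is_tree_def simple_graph_def by blast
  then show ?thesis by (auto simp: doubleton_eq_iff)
qed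

lemma reach: "u \<in> V \<Longrightarrow> v \<in> V \<Longrightarrow> reach V E u v"
  using tree unfolding is_tree_def graph_connected_def reach_def by blast

lemma tri: "u \<in> V \<Longrightarrow> v \<in> V \<Longrightarrow> w \<in> V \<Longrightarrow> d u w \<le> d u v + d v w"
  using gdist_triangle reach by metis

lemma d_edge: "{u,v} \<in> E \<Longrightarrow> d u v = 1"
proof -
  assume e: "{u,v} \<in> E"
  then have "u \<in> V" "v \<in> V" "u \<noteq> v" using edge_in by auto
  then show ?thesis using gdist_edge[OF e] gdist_0[OF reach] by fastforce
qed

lemma d_0: "u \<in> V \<Longrightarrow> v \<in> V \<Longrightarrow> d u v = 0 \<longleftrightarrow> u = v"
  using gdist_0[OF reach] gdist_refl by metis

lemma no_cyc:
  assumes w: "is_walk V E (a # ys)" and "a \<notin> set ys" "ys \<noteq> []" "hd ys \<noteq> c" "last ys = c" "{a,c} \<in> E"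
  shows False
proof -
  let ?E = "E - {{a,c}}"
  have wE: "is_walk V ?E (a # ys)"
    unfolding is_walk_def
  proof (intro conjI allI impI)
    show "set (a # ys) \<subseteq> V" using w unfolding is_walk_def by (elim conjE)
    fix i assume i: "i < length (a # ys) - 1"
    have inE: "{(a # ys) ! i, (a # ys) ! Suc i} \<in> E" using w i unfolding is_walk_def by blast
    have "{(a # ys) ! i, (a # ys) ! Suc i} \<noteq> {a,c}"
    proof (cases i)
      case 0
      then have "(a # ys) ! i = a" "(a # ys) ! Suc i = hd ys" using assms(3) by (auto simp: hd_conv_nth)
      then show ?thesis using assms(4) by (auto simp: doubleton_eq_iff)
    next
      case (Suc j)
      then have "(a # ys) ! i = ys ! j" "(a # ys) ! Suc i = ys ! Suc j" "j < length ys" "Suc j < length ys"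
        using i by auto
      then have s: "(a # ys) ! i \<in> set ys" "(a # ys) ! Suc i \<in> set ys" by (metis nth_mem)+
      show ?thesis
      proof
        assume "{(a # ys) ! i, (a # ys) ! Suc i} = {a, c}"
        then have "a \<in> {(a # ys) ! i, (a # ys) ! Suc i}" by simp
        then show False using s assms(2) by auto
      qed
    qed
    then show "{(a # ys) ! i, (a # ys) ! Suc i} \<in> ?E" using inE by simp
  qed simp
  obtain zs where zs: "is_walk V ?E zs" "distinct zs" "hd zs = a" "last zs = c"
    using walk_distinct[OF wE] assms(3,5) by auto
  have "c \<in> set ys" using assms(3,5) last_in_set by metis
  then have "a \<noteq> c" using assms(2) by auto
  have "zs \<noteq> []" using zs(1) walk_Nil by metis
  have "length zs \<noteq> 1"
  proof
    assume "length zs = 1"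
    then obtain z where "zs = [z]" by (auto simp: length_Suc_conv)
    then show False using zs(3,4) \<open>a \<noteq> c\<close> by simp
  qed
  moreover have "length zs \<noteq> 2"
  proof
    assume "length zs = 2"
    then obtain p q where "zs = [p,q]" by (auto simp: length_Suc_conv numeral_2_eq_2)
    then have "{a,c} \<in> ?E" using zs(1,3,4) by simp
    then show False by simp
  qed
  moreover have "length zs \<noteq> 0" using \<open>zs \<noteq> []\<close> by simp
  ultimately have "length zs \<ge> 3" by linarith
  moreover have "is_walk V E zs" using zs(1) by (rule walk_mono) auto
  moreover have "{last zs, hd zs} \<in> E" using zs(3,4) assms(6) by (simp add: insert_commute)
  ultimately have "has_cycle V E" unfolding has_cycle_def using zs(2) by blast
  then show False using tree unfolding is_tree_def by blast
qed

end

locale rooted = tree +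
  fixes x assumes xV: "x \<in> V"
begin

definition spw where
  "spw P v \<longleftrightarrow> is_walk V E P \<and> hd P = x \<and> last P = v \<and> length P = Suc (d x v)"

lemma spw_ex: "v \<in> V \<Longrightarrow> \<exists>P. spw P v"
  unfolding spw_def using gdist_walk[OF reach[OF xV]] by blast

lemma SP:
  assumes "spw P v" "i < length P"
  shows "d x (P ! i) = i"
proof -
  have P: "is_walk V E P" "hd P = x" "last P = v" "length P = Suc (d x v)" using assms(1) spw_def by auto
  have Pi: "P ! i \<in> V" using P assms(2) unfolding is_walk_def by auto
  have vV: "v \<in> V" using P unfolding is_walk_def by (metis last_in_set subsetD walk_Nil)
  have w1: "is_walk V E (take (Suc i) P)" using walk_take[OF P(1)] assms(2) by simp
  have "hd (take (Suc i) P) = x" using P assms(2) by (cases P) auto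
  moreover have "last (take (Suc i) P) = P ! i" using assms(2) by (simp add: take_Suc_conv_app_nth)
  ultimately have le1: "d x (P ! i) \<le> i" using gdist_le[OF w1] assms(2) by fastforce
  have w2: "is_walk V E (drop i P)" using walk_drop[OF P(1) assms(2)] .
  have "hd (drop i P) = P ! i" using assms(2) by (simp add: hd_drop_conv_nth)
  moreover have "last (drop i P) = v" using assms(2) P by simp
  ultimately have le2: "d (P ! i) v \<le> length P - i - 1" using gdist_le[OF w2] by fastforce
  have "d x v \<le> d x (P ! i) + d (P ! i) v" using tri[OF xV Pi vV] .
  then show ?thesis using le1 le2 P assms(2) by linarith
qed

lemma SP_set:
  assumes "spw P v" "w \<in> set P"
  shows "\<exists>i. i < length P \<and> P ! i = w \<and> d x w = i"
  using assms SP by (metis in_set_conv_nth)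

lemma spw_facts: "spw P v \<Longrightarrow> is_walk V E P \<and> hd P = x \<and> last P = v \<and> length P = Suc (d x v) \<and> P \<noteq> []"
  unfolding spw_def by auto

lemma par_unique:
  assumes "{u,w1} \<in> E" "{u,w2} \<in> E" "d x w1 < d x u" "d x w2 < d x u"
  shows "w1 = w2"
proof (rule ccontr)
  assume ne: "w1 \<noteq> w2"
  have V: "u \<in> V" "w1 \<in> V" "w2 \<in> V" using edge_in assms by auto
  obtain P1 where P1: "spw P1 w1" using spw_ex V by blast
  obtain P2 where P2: "spw P2 w2" using spw_ex V by blast
  note F1 = spw_facts[OF P1] and F2 = spw_facts[OF P2]
  define ys where "ys = rev P2 @ tl P1"
  have wys: "is_walk V E ys" unfolding ys_def
    using walk_glue[OF walk_rev[of V E P2] F1[THEN conjunct1]] F1 F2 by (simp add: last_rev)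
  have hys: "hd ys = w2" unfolding ys_def using hd_glue[of "rev P2" "tl P1"] F2 by (simp add: hd_rev)
  have lys: "last ys = w1" unfolding ys_def using last_glue[of "rev P2" P1] F1 F2 by (simp add: last_rev)
  have "ys \<noteq> []" unfolding ys_def using F2 by simp
  have "u \<notin> set ys"
  proof
    assume "u \<in> set ys"
    then have "u \<in> set P2 \<or> u \<in> set P1" unfolding ys_def using set_tl_sub[of P1] by auto
    then show False
    proof
      assume "u \<in> set P2"
      then obtain i where "i < length P2" "d x u = i" using SP_set[OF P2] by blast
      then show False using F2 assms(4) by simp
    next
      assume "u \<in> set P1"
      then obtain i where "i < length P1" "d x u = i" using SP_set[OF P1] by blast
      then show False using F1 assms(3) by simp
    qed
  qed
  have "is_walk V E (u # ys)" using wys hys V assms(2) \<open>ys \<noteq> []\<close> by (cases ys) auto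
  then show False using no_cyc[of u ys w1] \<open>u \<notin> set ys\<close> \<open>ys \<noteq> []\<close> hys lys ne assms(1) by blast
qed

lemma bip:
  assumes e: "{u,w} \<in> E" shows "d x u \<noteq> d x w"
proof
  assume eq: "d x u = d x w"
  have V: "u \<in> V" "w \<in> V" "u \<noteq> w" using edge_in e by auto
  define k where "k = d x u"
  have "k \<noteq> 0"
  proof
    assume "k = 0"
    then have "d x u = 0" "d x w = 0" using eq k_def by auto
    then have "u = x" "w = x" using d_0[OF xV, of u] d_0[OF xV, of w] V by auto
    then show False using V by simp
  qed
  obtain Pu where Pu: "spw Pu u" using spw_ex V by blast
  obtain Pw where Pw: "spw Pw w" using spw_ex V by blast
  note Fu = spw_facts[OF Pu] and Fw = spw_facts[OF Pw]
  define ys where "ys = tl (rev Pw) @ tl Pu"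
  have rne: "rev Pw \<noteq> []" using Fw by simp
  have "hd (rev Pw) = w" using Fw by (simp add: hd_rev)
  then have rw: "rev Pw = w # tl (rev Pw)" using list.collapse[OF rne] by simp
  have eqw: "w # ys = rev Pw @ tl Pu" unfolding ys_def using rw by (metis append_Cons)
  have wys: "is_walk V E (w # ys)" unfolding eqw
    using walk_glue[OF walk_rev[of V E Pw] Fu[THEN conjunct1]] Fu Fw by (simp add: last_rev)
  have lenw: "length Pw = Suc k" using Fw eq k_def by simp
  have lenu: "length Pu = Suc k" using Fu k_def by simp
  have "length (tl (rev Pw)) = k" using lenw by simp
  then have tlne: "tl (rev Pw) \<noteq> []" using \<open>k \<noteq> 0\<close> by (metis list.size(3))
  have tlne2: "tl Pu \<noteq> []" using lenu \<open>k \<noteq> 0\<close> by (cases Pu) auto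
  have ysne: "ys \<noteq> []" unfolding ys_def using tlne by simp
  have "hd ys = hd (rev (butlast Pw))" unfolding ys_def using tlne by (simp add: tl_rev_eq)
  moreover have "rev (butlast Pw) \<noteq> []" using tlne by (simp add: tl_rev_eq)
  ultimately have hys: "hd ys \<in> set (butlast Pw)" using hd_in_set set_rev by metis
  have lt: "d x v < k" if vin: "v \<in> set (butlast Pw)" for v
  proof -
    obtain i where i: "i < length Pw - 1" "Pw ! i = v" using in_butlast_nth[OF vin] by blast
    then have "d x (Pw ! i) = i" using SP[OF Pw, of i] by simp
    then show ?thesis using i lenw by simp
  qed
  have hne: "hd ys \<noteq> u" using lt[OF hys] k_def by auto
  have lys: "last ys = u" unfolding ys_def using tlne2 Fu by (simp add: last_tl)
  have "w \<notin> set ys"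
  proof
    assume "w \<in> set ys"
    then have "w \<in> set (rev (butlast Pw)) \<or> w \<in> set (tl Pu)" unfolding ys_def tl_rev_eq set_append by (rule UnE) blast+
    then have "w \<in> set (butlast Pw) \<or> w \<in> set (tl Pu)" by (simp only: set_rev)
    then show False
    proof
      assume "w \<in> set (butlast Pw)" then show False using lt[of w] eq k_def by simp
    next
      assume wtl: "w \<in> set (tl Pu)"
      obtain i where i: "0 < i" "i < length Pu" "Pu ! i = w" using in_tl_nth[OF wtl] by blast
      then have "d x (Pu ! i) = i" using SP[OF Pu, of i] by simp
      then have "i = k" using i eq k_def by simp
      then have "Pu ! (length Pu - 1) = w" using i lenu by simp
      then have "w = last Pu" using last_conv_nth[of Pu] Fu by simp
      then show False using Fu V by simp
    qed
  qed
  have "{w,u} \<in> E" using e by (simp add: insert_commute)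
  then show False using no_cyc[of w ys u] wys \<open>w \<notin> set ys\<close> ysne hne lys by blast
qed

lemma nbr:
  assumes e: "{u,w} \<in> E" shows "d x w = d x u + 1 \<or> d x w + 1 = d x u"
proof -
  have V: "u \<in> V" "w \<in> V" using edge_in e by auto
  have "d x w \<le> d x u + d u w" "d x u \<le> d x w + d w u" using tri xV V by auto
  moreover have "d u w = 1" "d w u = 1" using d_edge e by (auto simp: insert_commute)
  ultimately show ?thesis using bip[OF e] by linarith
qed

definition par where "par u = (SOME w. {w,u} \<in> E \<and> d x w + 1 = d x u)"

lemma par:
  assumes "u \<in> V" "u \<noteq> x"
  shows "{par u, u} \<in> E \<and> d x (par u) + 1 = d x u \<and> par u \<in> V"
proof -
  have "\<exists>w. {w,u} \<in> E \<and> d x w + 1 = d x u"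
    using pred_exists[OF reach[OF xV assms(1)]] assms(2) by metis
  then have "{par u, u} \<in> E \<and> d x (par u) + 1 = d x u" unfolding par_def by (rule someI_ex)
  then show ?thesis using edge_in by blast
qed

lemma dx0: "u \<in> V \<Longrightarrow> d x u = 0 \<longleftrightarrow> u = x"
  using d_0[OF xV, of u] by auto

lemma par_eq:
  assumes "{w,u} \<in> E" "d x w < d x u"
  shows "w = par u"
proof -
  have V: "u \<in> V" "w \<in> V" using edge_in assms by auto
  have "u \<noteq> x" using assms(2) gdist_refl[of x V E] xV by auto
  note p = par[OF V(1) this]
  show ?thesis using par_unique[of u w "par u"] assms p by (simp add: insert_commute)
qed

lemma nbr_cases:
  assumes "{w,u} \<in> E" shows "w = par u \<or> d x w = d x u + 1"
  using nbr[of u w] assms par_eq[OF assms] by (auto simp: insert_commute)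

definition anc where "anc j v = (par ^^ j) v"

lemma anc_props:
  assumes "v \<in> V" "j \<le> d x v"
  shows "anc j v \<in> V \<and> d x (anc j v) + j = d x v \<and> d (anc j v) v \<le> j"
  using assms(2)
proof (induction j)
  case 0 then show ?case using assms gdist_refl[of v V E] by (simp add: anc_def)
next
  case (Suc j)
  define w where "w = anc j v"
  have IH: "w \<in> V" "d x w + j = d x v" "d w v \<le> j" using Suc w_def by auto
  have "w \<noteq> x" using IH Suc.prems dx0 by fastforce
  note p = par[OF IH(1) this]
  have "anc (Suc j) v = par w" unfolding w_def anc_def by simp
  moreover have "d (par w) v \<le> d (par w) w + d w v" using tri p IH assms by blast
  moreover have "d (par w) w = 1" using d_edge p by blast
  ultimately show ?case using p IH by simp
qed

lemma anc_add: "anc i (anc j v) = anc (i + j) v"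
  unfolding anc_def by (simp add: funpow_add)

lemma ancestor:
  assumes "u \<in> V" "v \<in> V" "d x v = d x u + d u v"
  shows "u = anc (d u v) v"
  using assms(2,3)
proof (induction "d u v" arbitrary: v)
  case 0
  then have "u = v" using d_0 assms(1) by metis
  then show ?case using "0.prems"(1) by (simp add: anc_def gdist_refl)
next
  case (Suc j)
  have "u \<noteq> v" using Suc.hyps(2) gdist_refl[of v V E] Suc.prems(1) by auto
  obtain z where z: "{z,v} \<in> E" "z \<in> V" "d u z + 1 = d u v"
    using pred_exists[OF reach[OF assms(1) Suc.prems(1)] \<open>u \<noteq> v\<close>] by blast
  have "d x z \<le> d x u + d u z" using tri xV assms(1) z by blast
  then have "d x z < d x v" using Suc z(3) by linarith
  then have "z = par v" by (rule par_eq[OF z(1)])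
  have "d x v \<le> d x z + 1" using nbr[of z v] z(1) by (auto simp: insert_commute)
  then have "d x z = d x u + d u z" using \<open>d x z \<le> d x u + d u z\<close> z Suc by linarith
  then have "u = anc (d u z) z" using Suc.hyps(1)[of z] z Suc by simp
  moreover have "anc (Suc (d u z)) v = anc (d u z) z" unfolding anc_def using \<open>z = par v\<close>
    by (simp add: funpow_Suc_right del: funpow.simps)
  ultimately show ?case using z(3) by simp
qed

lemma leaf_unique:
  assumes "is_leaf V E l" "{w,l} \<in> E" "{w',l} \<in> E"
  shows "w = w'"
proof -
  have "card {u \<in> V. {u, l} \<in> E} = 1" using assms(1) unfolding is_leaf_def degree_def by simp
  then obtain z where "{u \<in> V. {u, l} \<in> E} = {z}" by (rule card_1_singletonE)
  moreover have "w \<in> V" "w' \<in> V" using edge_in assms by auto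
  ultimately have "w \<in> {z}" "w' \<in> {z}" using assms(2,3) by blast+
  then show ?thesis by simp
qed

lemma leaf_if_no_child:
  assumes "u \<in> V" "u \<noteq> x" "\<And>w. {w,u} \<in> E \<Longrightarrow> d x w \<noteq> d x u + 1"
  shows "is_leaf V E u"
proof -
  note p = par[OF assms(1,2)]
  have "{w \<in> V. {w,u} \<in> E} = {par u}"
    using p nbr_cases assms(3) by blast
  then show ?thesis unfolding is_leaf_def degree_def using assms by simp
qed

end



context rooted begin

abbreviation Vx where "Vx \<equiv> V - {x}"
abbreviation Ex where "Ex \<equiv> {e \<in> E. x \<notin> e}"
definition compset where "compset v = {u. reach Vx Ex v u}"

lemma comp_eq:
  assumes "comp_minus V E x C" "u \<in> C"
  shows "C = compset u"
proof -
  obtain v where v: "v \<in> Vx" "C = {u. \<exists>xs. is_walk Vx Ex xs \<and> hd xs = v \<and> last xs = u}"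
    using assms(1) unfolding comp_minus_def is_component_def by blast
  then have C: "C = compset v" unfolding compset_def reach_def by simp
  then have vu: "reach Vx Ex v u" using assms(2) compset_def by auto
  show ?thesis
  proof (intro set_eqI iffI)
    fix w assume "w \<in> C"
    then have "reach Vx Ex v w" using C compset_def by auto
    then have "reach Vx Ex u w" using reach_trans[OF reach_sym[OF vu]] by blast
    then show "w \<in> compset u" unfolding compset_def by simp
  next
    fix w assume "w \<in> compset u"
    then have "reach Vx Ex u w" unfolding compset_def by simp
    then have "reach Vx Ex v w" using reach_trans[OF vu] by blast
    then show "w \<in> C" using C compset_def by auto
  qed
qed

lemma comp_sub:
  assumes "comp_minus V E x C" "u \<in> C" shows "u \<in> V \<and> u \<noteq> x"
proof -
  have "reach Vx Ex u u" using comp_eq[OF assms] assms(2) compset_def by auto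
  then show ?thesis using reach_in by fastforce
qed

lemma comp_closed:
  assumes "comp_minus V E x C" "u \<in> C" "{u,w} \<in> E" "w \<noteq> x"
  shows "w \<in> C"
proof -
  have u: "u \<in> V" "u \<noteq> x" using comp_sub assms by auto
  have "w \<in> V" using edge_in assms by auto
  have "{u,w} \<in> Ex" using assms u by auto
  then have "reach Vx Ex u w" using reach_edge[of u w Ex Vx] u \<open>w \<in> V\<close> assms(4) by auto
  then show ?thesis using comp_eq[OF assms(1,2)] compset_def by auto
qed

lemma comp_walk:
  assumes C: "comp_minus V E x C"
  shows "is_walk V E P \<Longrightarrow> hd P \<in> C \<Longrightarrow> x \<notin> set P \<Longrightarrow> set P \<subseteq> C"
proof (induction P)
  case Nil then show ?case by simp
next
  case (Cons a P)
  show ?case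
  proof (cases P)
    case Nil then show ?thesis using Cons.prems by simp
  next
    case (Cons c P')
    then have "{a,c} \<in> E" "is_walk V E P" using Cons.prems by auto
    moreover have "c \<noteq> x" using Cons.prems Cons by auto
    ultimately have "c \<in> C" using comp_closed[OF C, of a c] Cons.prems by simp
    then have "set P \<subseteq> C" using Cons.IH Cons.prems \<open>is_walk V E P\<close> \<open>P = c # P'\<close> by simp
    then show ?thesis using Cons.prems by simp
  qed
qed

lemma cut:
  assumes C: "comp_minus V E x C" and "u \<in> C" "v \<in> V" "v \<notin> C"
  shows "d u v = d u x + d x v"
proof -
  have uV: "u \<in> V" using comp_sub assms by auto
  obtain P where P: "is_walk V E P" "hd P = u" "last P = v" "length P = Suc (d u v)"
    using gdist_walk[OF reach[OF uV assms(3)]] by blast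
  have "x \<in> set P"
  proof (rule ccontr)
    assume "x \<notin> set P"
    then have "set P \<subseteq> C" using comp_walk[OF C P(1)] P assms(2) by simp
    then show False using P assms(4) by (metis last_in_set subsetD walk_Nil)
  qed
  then obtain i where i: "i < length P" "P ! i = x" by (auto simp: in_set_conv_nth)
  have w1: "is_walk V E (take (Suc i) P)" using walk_take[OF P(1)] i by simp
  have "hd (take (Suc i) P) = u" using P i by (cases P) auto
  moreover have "last (take (Suc i) P) = x" using i by (simp add: take_Suc_conv_app_nth)
  ultimately have le1: "d u x \<le> i" using gdist_le[OF w1] i by fastforce
  have w2: "is_walk V E (drop i P)" using walk_drop[OF P(1) i(1)] .
  have "hd (drop i P) = x" using i by (simp add: hd_drop_conv_nth)
  moreover have "last (drop i P) = v" using i P by simp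
  ultimately have le2: "d x v \<le> length P - i - 1" using gdist_le[OF w2] by fastforce
  have "d u v \<le> d u x + d x v" using tri uV xV assms(3) by blast
  then show ?thesis using le1 le2 P i by linarith
qed

lemma comp_disj:
  assumes "comp_minus V E x C1" "comp_minus V E x C2" "C1 \<noteq> C2"
  shows "C1 \<inter> C2 = {}"
proof (rule ccontr)
  assume "C1 \<inter> C2 \<noteq> {}"
  then obtain u where "u \<in> C1" "u \<in> C2" by blast
  then show False using comp_eq[OF assms(1)] comp_eq[OF assms(2)] assms(3) by metis
qed

lemma leaf_comp:
  assumes C: "comp_minus V E x C" and "l \<in> C" "is_leaf V E l" "{l,x} \<in> E"
  shows "C = {l}"
proof -
  have "compset l \<subseteq> {l}"
  proof
    fix w assume "w \<in> compset l"
    then obtain xs where xs: "is_walk Vx Ex xs" "hd xs = l" "last xs = w"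
      unfolding compset_def reach_def by blast
    show "w \<in> {l}"
    proof (cases xs)
      case Nil then show ?thesis using xs by simp
    next
      case (Cons a ys)
      show ?thesis
      proof (cases ys)
        case Nil then show ?thesis using xs Cons by simp
      next
        case (Cons c zs)
        then have "{l,c} \<in> Ex" using xs \<open>xs = a # ys\<close> by auto
        then have "{c,l} \<in> E" "x \<notin> {l,c}" by (auto simp: insert_commute)
        moreover have "{x,l} \<in> E" using assms(4) by (simp add: insert_commute)
        ultimately show ?thesis using leaf_unique[OF assms(3)] by blast
      qed
    qed
  qed
  moreover have "l \<in> compset l" using comp_eq[OF C assms(2)] assms(2) by simp
  ultimately show ?thesis using comp_eq[OF C assms(2)] by blast
qed

end

lemma sum_lessThan_Suc_shift: "(\<Sum>j<Suc q. f j) = (\<Sum>j<q. f j) + f q"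
  by simp




definition dd :: "nat \<Rightarrow> nat \<Rightarrow> nat" where "dd i j = (if i \<le> j then j - i else i - j)"

locale broom = rooted +
  fixes C b y
  assumes comp: "comp_minus V E x C"
    and brooms: "card {b \<in> C. is_broom V E b} = 1"
    and yC: "y \<in> C" and yleaf: "is_leaf V E y" and yb: "{y,b} \<in> E"
    and xnl: "\<not> is_leaf V E x"
begin

lemma CV: "C \<subseteq> V" "x \<notin> C"
  using comp_sub[OF comp] by auto

lemma finC: "finite C" using CV finV finite_subset by blast

lemma b_ne_x: "b \<noteq> x"
proof
  assume bx: "b = x"
  then have Cy: "C = {y}" using leaf_comp[OF comp yC yleaf] yb by simp
  have "{b \<in> C. is_broom V E b} \<noteq> {}" using brooms by (metis card.empty zero_neq_one)
  then obtain b0 where "b0 \<in> C" "is_broom V E b0" by blast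
  then have "b0 = y" "is_broom V E y" using Cy by auto
  then obtain z where z: "is_leaf V E z" "{y,z} \<in> E" unfolding is_broom_def by blast
  have "z = x" using leaf_unique[OF yleaf, of z x] z(2) yb bx by (simp add: insert_commute)
  then show False using z xnl by simp
qed

lemma bC: "b \<in> C" using comp_closed[OF comp yC yb b_ne_x] .

lemma bV: "b \<in> V" using bC CV by auto

lemma broom_set: "{b' \<in> C. is_broom V E b'} = {b}"
proof -
  have "is_broom V E b" unfolding is_broom_def using bV yleaf yb by (auto simp: insert_commute)
  then have "b \<in> {b' \<in> C. is_broom V E b'}" using bC by simp
  then show ?thesis using brooms by (metis card_1_singletonE singletonD)
qed

lemma leafC:
  assumes "l \<in> C" "is_leaf V E l"
  shows "par l = b \<and> d x l = d x b + 1 \<and> {b,l} \<in> E"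
proof -
  have lV: "l \<in> V" "l \<noteq> x" using assms CV by auto
  note p = par[OF lV]
  have "par l \<noteq> x"
  proof
    assume px: "par l = x"
    then have "C = {l}" using leaf_comp[OF comp assms] p by (simp add: insert_commute)
    then have "y = l" using yC by simp
    then have "b = x" using leaf_unique[OF yleaf, of b x] yb p px by (simp add: insert_commute)
    then show False using b_ne_x by simp
  qed
  then have "par l \<in> C" using comp_closed[OF comp assms(1), of "par l"] p by (simp add: insert_commute)
  moreover have "is_broom V E (par l)" unfolding is_broom_def using p assms(2) by blast
  ultimately have "par l = b" using broom_set by blast
  then show ?thesis using p by simp
qed

definition q where "q = d x b"

lemma qpos: "q \<ge> 1"
  using dx0[OF bV] b_ne_x q_def by simp

lemma y_dist: "d x y = q + 1"
  using leafC[OF yC yleaf] q_def by simp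

lemma nonleaf_anc:
  assumes uC: "u \<in> C" and nl: "\<not> is_leaf V E u"
  shows "d x b = d x u + d u b"
proof -
  have uV: "u \<in> V" "u \<noteq> x" using uC CV by auto
  define D where "D = {w \<in> V. d x w = d x u + d u w}"
  have finD: "finite D" unfolding D_def using finV by simp
  have "u \<in> D" unfolding D_def using uV gdist_refl[of u V E] by simp
  then have Dne: "D \<noteq> {}" by blast
  define M where "M = Max ((\<lambda>w. d x w) ` D)"
  have "M \<in> (\<lambda>w. d x w) ` D" unfolding M_def using finD Dne by (intro Max_in) auto
  then obtain w where wD: "w \<in> D" "d x w = M" by blast
  have maxw: "d x w' \<le> d x w" if w'D: "w' \<in> D" for w'
  proof -
    have "d x w' \<in> (\<lambda>w. d x w) ` D" using w'D by blast
    then have "d x w' \<le> M" unfolding M_def using finD by (intro Max_ge) auto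
    then show ?thesis using wD by simp
  qed
  obtain c where c: "{c,u} \<in> E" "d x c = d x u + 1"
    using leaf_if_no_child[OF uV] nl by blast
  have cV: "c \<in> V" using edge_in c by auto
  have "d u c = 1" using d_edge c(1) by (simp add: insert_commute)
  then have "c \<in> D" unfolding D_def using c cV by simp
  then have "d x w \<ge> d x u + 1" using maxw c by fastforce
  have wV: "w \<in> V" "d x w = d x u + d u w" using wD D_def by auto
  have "w \<noteq> x" using \<open>d x w \<ge> d x u + 1\<close> gdist_refl[OF xV] by auto
  have wleaf: "is_leaf V E w"
  proof (rule leaf_if_no_child[OF wV(1) \<open>w \<noteq> x\<close>])
    fix z assume z: "{z,w} \<in> E"
    show "d x z \<noteq> d x w + 1"
    proof
      assume zd: "d x z = d x w + 1"
      have zV: "z \<in> V" using edge_in z by auto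
      have "d x z \<le> d x u + d u z" using tri xV uV zV by blast
      moreover have "d u z \<le> d u w + d w z" using tri uV wV zV by blast
      moreover have "d w z = 1" using d_edge z by (simp add: insert_commute)
      ultimately have "z \<in> D" unfolding D_def using zV zd wV by simp
      then show False using maxw zd by fastforce
    qed
  qed
  have "w \<in> C"
  proof (rule ccontr)
    assume "w \<notin> C"
    then have "d u w = d u x + d x w" using cut[OF comp uC wV(1)] by simp
    then have "d u x = 0" using wV by simp
    then show False using d_0 uV xV by blast
  qed
  note lw = leafC[OF this wleaf]
  have "u \<noteq> w" using \<open>d x w \<ge> d x u + 1\<close> by auto
  obtain z where z: "{z,w} \<in> E" "d u z + 1 = d u w"
    using pred_exists[OF reach[OF uV(1) wV(1)] \<open>u \<noteq> w\<close>] by blast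
  have "z = b" using leaf_unique[OF wleaf z(1)] lw by (simp add: insert_commute)
  then show ?thesis using z lw wV by simp
qed

lemma anc_in:
  assumes j: "j < q"
  shows "anc j b \<in> C \<and> \<not> is_leaf V E (anc j b) \<and> d x (anc j b) + j = q \<and> d (anc j b) b = j"
proof -
  define v where "v = anc j b"
  have ap: "v \<in> V" "d x v + j = q" "d v b \<le> j" using anc_props[OF bV, of j] j q_def v_def by auto
  have "d x b \<le> d x v + d v b" using tri xV ap bV by blast
  then have dvb: "d v b = j" using ap q_def by simp
  have "v \<noteq> x" using ap j dx0 by fastforce
  have vC: "v \<in> C"
  proof (rule ccontr)
    assume "v \<notin> C"
    then have "d b v = d b x + d x v" using cut[OF comp bC ap(1)] by simp
    moreover have "d b x = q" "d b v = j" using gdist_sym q_def dvb by metis+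
    ultimately show False using ap j by linarith
  qed
  obtain c where c: "{c,v} \<in> E" "d x c = d x v + 1"
  proof (cases j)
    case 0
    then have "v = b" unfolding v_def anc_def by simp
    then show ?thesis using that[of y] yb y_dist ap 0 by simp
  next
    case (Suc j')
    define c where "c = anc j' b"
    have cp: "c \<in> V" "d x c + j' = q" using anc_props[OF bV, of j'] j q_def c_def Suc by auto
    have "c \<noteq> x" using cp Suc j dx0 by fastforce
    note pc = par[OF cp(1) this]
    have "par c = v" unfolding v_def c_def anc_def Suc by simp
    then show ?thesis using that[of c] pc cp ap Suc by (simp add: insert_commute)
  qed
  note pv = par[OF ap(1) \<open>v \<noteq> x\<close>]
  have "\<not> is_leaf V E v"
  proof
    assume lf: "is_leaf V E v"
    have pe: "{par v, v} \<in> E" using pv by simp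
    have "c = par v" using leaf_unique[OF lf c(1) pe] .
    then show False using c pv by simp
  qed
  then show ?thesis using vC ap dvb v_def by simp
qed

definition NC where "NC = {u \<in> C. \<not> is_leaf V E u}"
definition LC where "LC = {u \<in> C. is_leaf V E u}"

lemma NC_eq: "NC = (\<lambda>j. anc j b) ` {..<q}"
proof (intro set_eqI iffI)
  fix u assume "u \<in> NC"
  then have u: "u \<in> C" "\<not> is_leaf V E u" unfolding NC_def by auto
  have uV: "u \<in> V" "u \<noteq> x" using u CV by auto
  have e: "d x b = d x u + d u b" using nonleaf_anc u by blast
  have "u = anc (d u b) b" using ancestor[OF uV(1) bV e] .
  moreover have "d x u \<ge> 1" using dx0 uV by fastforce
  then have "d u b < q" using e q_def by simp
  ultimately show "u \<in> (\<lambda>j. anc j b) ` {..<q}" by blast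
next
  fix u assume "u \<in> (\<lambda>j. anc j b) ` {..<q}"
  then show "u \<in> NC" using anc_in NC_def by auto
qed

lemma anc_inj: "inj_on (\<lambda>j. anc j b) {..<q}"
proof (rule inj_onI)
  fix i j assume ij: "i \<in> {..<q}" "j \<in> {..<q}" "anc i b = anc j b"
  have "d x (anc i b) + i = q" using anc_in[of i] ij by simp
  moreover have "d x (anc j b) + j = q" using anc_in[of j] ij by simp
  ultimately show "i = j" using ij(3) by simp
qed

lemma C_split: "C = NC \<union> LC" "NC \<inter> LC = {}"
  unfolding NC_def LC_def by auto

lemma finNC: "finite NC" and finLC: "finite LC"
  using finite_subset[OF _ finC, of NC] finite_subset[OF _ finC, of LC] unfolding NC_def LC_def by auto

lemma anc_dist:
  assumes "i \<le> j" "j < q"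
  shows "d (anc i b) (anc j b) = j - i"
proof -
  note ai = anc_in[of i] and aj = anc_in[of j]
  have iV: "anc i b \<in> V" "d x (anc i b) + i = q" using ai assms CV by auto
  have jV: "anc j b \<in> V" "d x (anc j b) + j = q" using aj assms CV by auto
  have "anc j b = anc (j - i) (anc i b)" using anc_add[of "j - i" i b] assms by simp
  then have le: "d (anc j b) (anc i b) \<le> j - i"
    using anc_props[OF iV(1), of "j - i"] iV assms by simp
  have "d x (anc i b) \<le> d x (anc j b) + d (anc j b) (anc i b)" using tri xV iV jV by blast
  then have "d (anc j b) (anc i b) = j - i" using le iV jV by linarith
  then show ?thesis using gdist_sym by metis
qed


lemma anc_dist': assumes "i < q" "j < q" shows "d (anc i b) (anc j b) = dd i j"
proof (cases "i \<le> j")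
  case True then show ?thesis using anc_dist[OF True assms(2)] unfolding dd_def by simp
next
  case False
  then have "j \<le> i" by simp
  then have "d (anc j b) (anc i b) = i - j" using anc_dist assms(1) by blast
  then show ?thesis using False gdist_sym unfolding dd_def by metis
qed

lemma leaf_facts:
  assumes "l \<in> LC"
  shows "{l,b} \<in> E" "\<And>w. {l,w} \<in> E \<Longrightarrow> w = b" "l \<in> V" "d x l = q + 1"
proof -
  have l: "l \<in> C" "is_leaf V E l" using assms LC_def by auto
  note f = leafC[OF l]
  show e: "{l,b} \<in> E" using f by (simp add: insert_commute)
  show "\<And>w. {l,w} \<in> E \<Longrightarrow> w = b" using leaf_unique[OF l(2)] e by (metis insert_commute)
  show "l \<in> V" using l CV by auto
  show "d x l = q + 1" using f q_def by simp
qed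

lemma leaf_d:
  assumes "l \<in> LC" "v \<in> V" "v \<noteq> l"
  shows "d l v = d b v + 1"
  using leaf_dist[of l b E, OF leaf_facts(1,2)[OF assms(1)] reach[OF leaf_facts(3)[OF assms(1)] assms(2)] assms(3)
      leaf_facts(3)[OF assms(1)] bV] by blast

lemma leaf_anc_d:
  assumes "l \<in> LC" "j < q"
  shows "d l (anc j b) = j + 1" "d (anc j b) l = j + 1"
proof -
  have a: "anc j b \<in> C" "\<not> is_leaf V E (anc j b)" "d (anc j b) b = j" using anc_in assms by auto
  have "anc j b \<noteq> l" using a assms LC_def by auto
  then have "d l (anc j b) = d b (anc j b) + 1" using leaf_d[OF assms(1)] a CV by auto
  then show "d l (anc j b) = j + 1" using a gdist_sym by metis
  then show "d (anc j b) l = j + 1" using gdist_sym by metis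
qed

lemma b_notLC: "b \<notin> LC"
  using anc_in[of 0] qpos LC_def by (simp add: anc_def)

lemma leaf_leaf_d:
  assumes "l \<in> LC" "l' \<in> LC" "l \<noteq> l'"
  shows "d l l' = 2"
proof -
  have "d l l' = d b l' + 1" using leaf_d[OF assms(1)] leaf_facts(3)[OF assms(2)] assms(3) by auto
  moreover have "b \<noteq> l'" using b_notLC assms(2) by auto
  then have "d l' b = d b b + 1" using leaf_d[OF assms(2) bV] by simp
  moreover have "d b b = 0" using gdist_refl[OF bV] .
  moreover have "d b l' = d l' b" using gdist_sym by metis
  ultimately show ?thesis by simp
qed

end



lemma sum_qj: "2 * (\<Sum>j<q. (q::nat) - j) = q * (q + 1)"
proof (induction q)
  case 0 then show ?case by simp
next
  case (Suc q)
  have "(\<Sum>j<Suc q. Suc q - j) = (\<Sum>j<q. Suc q - j) + 1" by simp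
  also have "(\<Sum>j<q. Suc q - j) = (\<Sum>j<q. (q - j) + 1)" by (intro sum.cong) auto
  also have "\<dots> = (\<Sum>j<q. q - j) + (\<Sum>j<q. (1::nat))" by (rule sum.distrib)
  finally show ?case using Suc by (simp add: algebra_simps)
qed

lemma sum_j: "2 * (\<Sum>j<q. (j::nat)) + q = q * q"
  by (induction q) (auto simp: algebra_simps)

lemma sum_j1: "2 * (\<Sum>j<q. (j::nat) + 1) = q * (q + 1)"
  by (induction q) (auto simp: algebra_simps)

lemma sum_dd: "3 * (\<Sum>i<q. \<Sum>j<q. dd i j) + q = q ^ 3"
proof (induction q)
  case 0 then show ?case by simp
next
  case (Suc q)
  have "(\<Sum>i<Suc q. \<Sum>j<Suc q. dd i j) = (\<Sum>i<Suc q. (\<Sum>j<q. dd i j) + dd i q)" by simp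
  also have "\<dots> = (\<Sum>i<q. (\<Sum>j<q. dd i j) + dd i q) + ((\<Sum>j<q. dd q j) + dd q q)" by simp
  also have "\<dots> = (\<Sum>i<q. \<Sum>j<q. dd i j) + (\<Sum>i<q. dd i q) + (\<Sum>j<q. dd q j)"
    by (simp only: sum.distrib) (simp add: dd_def)
  also have "(\<Sum>i<q. dd i q) = (\<Sum>i<q. q - i)" by (intro sum.cong) (auto simp: dd_def)
  also have "(\<Sum>j<q. dd q j) = (\<Sum>j<q. q - j)" by (intro sum.cong) (auto simp: dd_def)
  finally have "(\<Sum>i<Suc q. \<Sum>j<Suc q. dd i j) = (\<Sum>i<q. \<Sum>j<q. dd i j) + 2 * (\<Sum>j<q. q - j)" by simp
  then have "3 * (\<Sum>i<Suc q. \<Sum>j<Suc q. dd i j) + Suc q = 3 * (\<Sum>i<q. \<Sum>j<q. dd i j) + q + 3 * (q * (q + 1)) + 1"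
    using sum_qj[of q] by simp
  also have "\<dots> = Suc q ^ 3" using Suc.IH by (simp add: power3_eq_cube algebra_simps)
  finally show ?case .
qed

context broom begin

definition t where "t = card LC"

lemma sum_C: "sum f C = sum f NC + sum f LC"
  by (subst C_split(1)) (rule sum.union_disjoint[OF finNC finLC C_split(2)])

lemma anc_dx: "j < q \<Longrightarrow> d x (anc j b) = q - j"
  using anc_in[of j] by arith

lemma sum_NC: "sum f NC = (\<Sum>j<q. f (anc j b))"
  unfolding NC_eq using sum.reindex[OF anc_inj, of f] by simp

lemma sum_LC_const: "(\<And>l. l \<in> LC \<Longrightarrow> f l = c) \<Longrightarrow> sum f LC = t * c"
  unfolding t_def by simp

lemma card_C: "card C = q + t"
proof -
  have "card NC = q" unfolding NC_eq using card_image[OF anc_inj] by simp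
  then show ?thesis using C_split finNC finLC card_Un_disjoint t_def by metis
qed

lemma SX: "(\<Sum>v\<in>C. d x v) = (\<Sum>j<q. q - j) + t * (q + 1)"
proof -
  have "(\<Sum>v\<in>NC. d x v) = (\<Sum>j<q. q - j)"
    unfolding sum_NC using anc_dx by (intro sum.cong) auto
  moreover have "(\<Sum>v\<in>LC. d x v) = t * (q + 1)"
    using leaf_facts(4) by (intro sum_LC_const) simp
  ultimately show ?thesis using sum_C[of "\<lambda>v. d x v"] by simp
qed

lemma SB: "(\<Sum>v\<in>C. d v b) = (\<Sum>j<q. j) + t"
proof -
  have "(\<Sum>v\<in>NC. d v b) = (\<Sum>j<q. j)"
    unfolding sum_NC using anc_in by (intro sum.cong) auto
  moreover have "(\<Sum>v\<in>LC. d v b) = t * 1"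
    using leaf_facts(1) d_edge by (intro sum_LC_const) simp
  ultimately show ?thesis using sum_C[of "\<lambda>v. d v b"] by simp
qed

lemma row_NC: "i < q \<Longrightarrow> (\<Sum>v\<in>C. d (anc i b) v) = (\<Sum>j<q. dd i j) + t * (i + 1)"
proof -
  assume i: "i < q"
  have "(\<Sum>v\<in>NC. d (anc i b) v) = (\<Sum>j<q. dd i j)"
    unfolding sum_NC using anc_dist' i by (intro sum.cong) auto
  moreover have "(\<Sum>v\<in>LC. d (anc i b) v) = t * (i + 1)"
    using leaf_anc_d(2) i by (intro sum_LC_const) simp
  ultimately show ?thesis using sum_C[of "\<lambda>v. d (anc i b) v"] by simp
qed

lemma row_LC: "l \<in> LC \<Longrightarrow> (\<Sum>v\<in>C. d l v) = (\<Sum>j<q. j + 1) + 2 * (t - 1)"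
proof -
  assume l: "l \<in> LC"
  have "(\<Sum>v\<in>NC. d l v) = (\<Sum>j<q. j + 1)"
    unfolding sum_NC using leaf_anc_d(1) l by (intro sum.cong) auto
  moreover have "(\<Sum>v\<in>LC. d l v) = 2 * (t - 1)"
  proof -
    have "(\<Sum>v\<in>LC. d l v) = (\<Sum>v\<in>LC - {l}. d l v) + d l l"
      using l finLC by (simp add: sum.remove add.commute)
    also have "(\<Sum>v\<in>LC - {l}. d l v) = (\<Sum>v\<in>LC - {l}. 2)"
      using leaf_leaf_d l by (intro sum.cong) auto
    also have "d l l = 0" using gdist_refl leaf_facts(3)[OF l] by metis
    finally show ?thesis using l finLC t_def by (simp add: card_Diff_singleton)
  qed
  ultimately show ?thesis using sum_C[of "\<lambda>v. d l v"] by simp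
qed

lemma SCC: "(\<Sum>u\<in>C. \<Sum>v\<in>C. d u v) =
   (\<Sum>i<q. \<Sum>j<q. dd i j) + 2 * (t * (\<Sum>j<q. j + 1)) + t * (2 * (t - 1))"
proof -
  have "(\<Sum>u\<in>NC. \<Sum>v\<in>C. d u v) = (\<Sum>i<q. (\<Sum>j<q. dd i j) + t * (i + 1))"
    unfolding sum_NC using row_NC by (intro sum.cong) auto
  also have "\<dots> = (\<Sum>i<q. \<Sum>j<q. dd i j) + t * (\<Sum>j<q. j + 1)"
    by (simp add: sum.distrib sum_distrib_left)
  finally have a: "(\<Sum>u\<in>NC. \<Sum>v\<in>C. d u v) = (\<Sum>i<q. \<Sum>j<q. dd i j) + t * (\<Sum>j<q. j + 1)" .
  have b: "(\<Sum>u\<in>LC. \<Sum>v\<in>C. d u v) = t * ((\<Sum>j<q. j + 1) + 2 * (t - 1))"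
    using row_LC by (intro sum_LC_const) simp
  show ?thesis using a b sum_C[of "\<lambda>u. \<Sum>v\<in>C. d u v"] by (simp add: algebra_simps)
qed

end



locale main = rooted +
  fixes T1 T2 L :: "'a set" and y1 y2 y1' :: 'a
  assumes sp: "special_pair V E x T1 T2"
   and degx: "degree V E x \<ge> 3"
   and y1: "y1 \<in> T1" "is_leaf V E y1" and y2: "y2 \<in> T2" "is_leaf V E y2"
   and e1: "{y1,y1'} \<in> E"
   and eqd: "d x y1 = d x y2"
   and finL: "finite L" and LA: "L \<inter> (V - T2) = {}" and cardL: "card L = card T2"
   and tt: "card {y\<in>T1. is_leaf V E y} = card {y\<in>T2. is_leaf V E y}"
begin

lemma xnl: "\<not> is_leaf V E x" using degx unfolding is_leaf_def by simp

lemma T12: "T1 \<noteq> T2" "comp_minus V E x T1" "comp_minus V E x T2"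
  "card {b\<in>T1. is_broom V E b} = 1" "card {b\<in>T2. is_broom V E b} = 1"
  using sp unfolding special_pair_def by auto

lemma y2V: "y2 \<in> V" "y2 \<noteq> x" using comp_sub[OF T12(3) y2(1)] by auto

sublocale B1: broom V E x T1 y1' y1
  by unfold_locales (use T12 y1 e1 xnl in auto)

sublocale B2: broom V E x T2 "par y2" y2
  using T12 y2 xnl par[OF y2V] by unfold_locales (auto simp: insert_commute)

definition A where "A = V - T2"
definition R where "R = A - T1"
definition V' where "V' = move_verts V T2 L"
definition E' where "E' = move_edges E T2 y1' L"
abbreviation d' where "d' \<equiv> gdist V' E'"

lemma disj12: "T1 \<inter> T2 = {}" using comp_disj T12 by blast

lemma finA: "finite A" unfolding A_def using finV by simp
lemma V'_eq: "V' = A \<union> L" unfolding V'_def move_verts_def A_def by simp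
lemma AL: "A \<inter> L = {}" using LA unfolding A_def by blast
lemma E'_mem: "e \<in> E' \<longleftrightarrow> (e \<in> E \<and> e \<inter> T2 = {}) \<or> (\<exists>l\<in>L. e = {y1', l})"
  unfolding E'_def move_edges_def by blast

lemma y1'A: "y1' \<in> A" using B1.bC B1.CV disj12 unfolding A_def by blast
lemma xA: "x \<in> A" using xV B2.CV unfolding A_def by blast
lemma AV: "A \<subseteq> V" unfolding A_def by blast
lemma T1A: "T1 \<subseteq> A" using B1.CV disj12 unfolding A_def by blast

definition q where "q = B1.q"
definition t where "t = B1.t"

lemma qeq: "B2.q = q"
  using B1.y_dist B2.y_dist eqd q_def by simp

lemma teq: "B2.t = t"
  unfolding t_def B1.t_def B2.t_def B1.LC_def B2.LC_def using tt by simp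

lemma cardT: "card T1 = q + t" "card T2 = q + t"
  using B1.card_C B2.card_C qeq teq q_def t_def by auto

lemma M1:
  assumes uA: "u \<in> A" and vA: "v \<in> A"
  shows "reach V' E' u v \<and> d' u v = d u v"
proof -
  define g where "g w = (if w \<in> T2 then x else w)" for w
  have g1: "g a \<in> V'" if "a \<in> V" for a
    using that xA unfolding g_def V'_eq A_def by auto
  have g2: "g a = g b' \<or> {g a, g b'} \<in> E'" if e: "{a,b'} \<in> E" "a \<in> V" "b' \<in> V" for a b'
  proof (cases "a \<in> T2")
    case aT: True
    show ?thesis
    proof (cases "b' \<in> T2")
      case True then show ?thesis using aT g_def by simp
    next
      case False
      then have "b' = x" using comp_closed[OF T12(3) aT e(1)] by blast
      then show ?thesis using aT False g_def by simp
    qed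
  next
    case aT: False
    show ?thesis
    proof (cases "b' \<in> T2")
      case True
      have "{b',a} \<in> E" using e by (simp add: insert_commute)
      then have "a = x" using comp_closed[OF T12(3) True] aT by blast
      then show ?thesis using aT True g_def by simp
    next
      case False
      then have "{a,b'} \<in> E'" using e aT unfolding E'_mem by blast
      then show ?thesis using aT False g_def by simp
    qed
  qed
  have "reach V' E' (g u) (g v) \<and> d' (g u) (g v) \<le> d u v"
    using map_dist[of V E u v g V' E', OF reach g1 g2] uA vA AV by blast
  moreover have "g u = u" "g v = v" using uA vA unfolding g_def A_def by auto
  ultimately have r1: "reach V' E' u v" and le1: "d' u v \<le> d u v" by auto
  define p where "p w = (if w \<in> L then y1' else w)" for w
  have p1: "p a \<in> V" if "a \<in> V'" for a
    using that y1'A AV unfolding p_def V'_eq by auto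
  have p2: "p a = p b' \<or> {p a, p b'} \<in> E" if e: "{a,b'} \<in> E'" "a \<in> V'" "b' \<in> V'" for a b'
  proof -
    have "({a,b'} \<in> E \<and> {a,b'} \<inter> T2 = {}) \<or> (\<exists>l\<in>L. {a,b'} = {y1', l})" using e(1) unfolding E'_mem .
    then show ?thesis
    proof
      assume h: "{a,b'} \<in> E \<and> {a,b'} \<inter> T2 = {}"
      then have "a \<in> A" "b' \<in> A" using edge_in unfolding A_def by auto
      then have "a \<notin> L" "b' \<notin> L" using AL by auto
      then show ?thesis using h p_def by simp
    next
      assume "\<exists>l\<in>L. {a,b'} = {y1', l}"
      then obtain l where l: "l \<in> L" "{a,b'} = {y1', l}" by blast
      have "y1' \<notin> L" using y1'A AL by auto
      then have "p y1' = y1'" "p l = y1'" using l p_def by auto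
      moreover have "(a = y1' \<and> b' = l) \<or> (a = l \<and> b' = y1')" using l by (auto simp: doubleton_eq_iff)
      ultimately show ?thesis by auto
    qed
  qed
  have "reach V E (p u) (p v) \<and> d (p u) (p v) \<le> d' u v"
    using map_dist[of V' E' u v p V E, OF r1 p1 p2] by blast
  moreover have "p u = u" "p v = v" using uA vA AL unfolding p_def by auto
  ultimately have "d u v \<le> d' u v" by auto
  then show ?thesis using r1 le1 by simp
qed

lemma lnbr: "l \<in> L \<Longrightarrow> {l,w} \<in> E' \<Longrightarrow> w = y1'"
proof -
  assume l: "l \<in> L" and e: "{l,w} \<in> E'"
  have "({l,w} \<in> E \<and> {l,w} \<inter> T2 = {}) \<or> (\<exists>l'\<in>L. {l,w} = {y1', l'})" using e unfolding E'_mem .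
  then show "w = y1'"
  proof
    assume h: "{l,w} \<in> E \<and> {l,w} \<inter> T2 = {}"
    then have "l \<in> A" using edge_in unfolding A_def by auto
    then show ?thesis using l AL by auto
  next
    assume "\<exists>l'\<in>L. {l,w} = {y1', l'}"
    then obtain l' where "l' \<in> L" "{l,w} = {y1', l'}" by blast
    moreover have "l \<noteq> y1'" using l y1'A AL by auto
    ultimately show ?thesis by (auto simp: doubleton_eq_iff)
  qed
qed

lemma lE': "l \<in> L \<Longrightarrow> {l, y1'} \<in> E'"
  using E'_mem by (auto simp: insert_commute)

lemma M2:
  assumes l: "l \<in> L" and uA: "u \<in> A"
  shows "reach V' E' l u \<and> d' l u = d u y1' + 1 \<and> d' u l = d u y1' + 1"
proof -
  have lV': "l \<in> V'" "y1' \<in> V'" using l y1'A V'_eq by auto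
  have r: "reach V' E' y1' u" using M1[OF y1'A uA] by blast
  have rl: "reach V' E' l u" using reach_trans[OF reach_edge[OF lE'[OF l] lV'] r] .
  have "u \<noteq> l" using uA l AL by auto
  then have "d' l u = d' y1' u + 1" using leaf_dist[OF lE'[OF l] lnbr[OF l] rl _ lV'] by blast
  also have "d' y1' u = d y1' u" using M1[OF y1'A uA] by blast
  also have "d y1' u = d u y1'" using gdist_sym by metis
  finally show ?thesis using rl gdist_sym by metis
qed

lemma M3:
  assumes l: "l \<in> L" and l': "l' \<in> L" and ne: "l \<noteq> l'"
  shows "d' l l' = 2"
proof -
  have lV': "l \<in> V'" "l' \<in> V'" "y1' \<in> V'" using l l' y1'A V'_eq by auto
  have r1: "reach V' E' l y1'" using reach_edge[OF lE'[OF l]] lV' by blast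
  have r2: "reach V' E' y1' l'" using reach_sym[OF reach_edge[OF lE'[OF l']]] lV' by blast
  have r3: "reach V' E' l' y1'" using reach_edge[OF lE'[OF l']] lV' by blast
  have "d' l l' = d' y1' l' + 1"
    using leaf_dist[OF lE'[OF l] lnbr[OF l] reach_trans[OF r1 r2] _ lV'(1,3)] ne by blast
  moreover have "y1' \<noteq> l'" using l' y1'A AL by auto
  then have "d' l' y1' = d' y1' y1' + 1"
    using leaf_dist[OF lE'[OF l'] lnbr[OF l'] r3 _ lV'(2,3)] by blast
  moreover have "d' y1' y1' = 0" using gdist_refl lV' by metis
  moreover have "d' y1' l' = d' l' y1'" using gdist_sym by metis
  ultimately show ?thesis by simp
qed

lemma M0: "l \<in> L \<Longrightarrow> d' l l = 0"
  using gdist_refl V'_eq by (metis UnI2)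

end



context main begin

definition m where "m = q + t"
definition XAA where "XAA = (\<Sum>u\<in>A. \<Sum>v\<in>A. d u v)"
definition DB where "DB = (\<Sum>u\<in>A. d u y1')"
definition DA where "DA = (\<Sum>u\<in>A. d x u)"
definition DR where "DR = (\<Sum>u\<in>R. d x u)"
definition S2 where "S2 = (\<Sum>v\<in>T2. d x v)"
definition X22 where "X22 = (\<Sum>u\<in>T2. \<Sum>v\<in>T2. d u v)"

lemma cardL': "card L = m" using cardL cardT m_def by simp

lemma splitV': "sum f V' = sum f A + sum f L"
  by (subst V'_eq) (rule sum.union_disjoint[OF finA finL AL])

lemma splitV: "sum f V = sum f A + sum f T2"
  using sum.subset_diff[of T2 V f] B2.CV finV unfolding A_def by simp

lemma L_row: "l \<in> L \<Longrightarrow> (\<Sum>v\<in>L. d' l v) = 2 * (m - 1)"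
proof -
  assume l: "l \<in> L"
  have "(\<Sum>v\<in>L. d' l v) = (\<Sum>v\<in>L - {l}. d' l v) + d' l l"
    using l finL by (simp add: sum.remove add.commute)
  also have "(\<Sum>v\<in>L - {l}. d' l v) = (\<Sum>v\<in>L - {l}. 2)"
    using M3 l by (intro sum.cong) auto
  also have "d' l l = 0" using M0 l by blast
  finally show ?thesis using l finL cardL' by (simp add: card_Diff_singleton)
qed

lemma X'_eq: "(\<Sum>u\<in>V'. \<Sum>v\<in>V'. d' u v) = XAA + 2 * (m * (DB + card A)) + m * (2 * (m - 1))"
proof -
  have rowA: "(\<Sum>v\<in>V'. d' u v) = (\<Sum>v\<in>A. d u v) + m * (d u y1' + 1)" if u: "u \<in> A" for u
  proof -
    have "(\<Sum>v\<in>A. d' u v) = (\<Sum>v\<in>A. d u v)" using M1 u by (intro sum.cong) auto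
    moreover have "(\<Sum>v\<in>L. d' u v) = (\<Sum>v\<in>L. d u y1' + 1)" using M2 u by (intro sum.cong) auto
    ultimately show ?thesis using splitV'[of "\<lambda>v. d' u v"] cardL' by simp
  qed
  have rowL: "(\<Sum>v\<in>V'. d' l v) = DB + card A + 2 * (m - 1)" if l: "l \<in> L" for l
  proof -
    have "(\<Sum>v\<in>A. d' l v) = (\<Sum>v\<in>A. d v y1' + 1)" using M2 l by (intro sum.cong) auto
    also have "\<dots> = (\<Sum>v\<in>A. d v y1') + (\<Sum>v\<in>A. (1::nat))" by (rule sum.distrib)
    also have "\<dots> = DB + card A" unfolding DB_def by simp
    finally show ?thesis using splitV'[of "\<lambda>v. d' l v"] L_row[OF l] by simp
  qed
  have "(\<Sum>u\<in>V'. \<Sum>v\<in>V'. d' u v) = (\<Sum>u\<in>A. \<Sum>v\<in>V'. d' u v) + (\<Sum>u\<in>L. \<Sum>v\<in>V'. d' u v)"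
    by (rule splitV')
  also have "(\<Sum>u\<in>A. \<Sum>v\<in>V'. d' u v) = (\<Sum>u\<in>A. (\<Sum>v\<in>A. d u v) + m * (d u y1' + 1))"
    using rowA by (rule sum.cong[OF refl])
  also have "\<dots> = XAA + (\<Sum>u\<in>A. m * (d u y1' + 1))" unfolding XAA_def by (rule sum.distrib)
  also have "(\<Sum>u\<in>A. m * (d u y1' + 1)) = m * (\<Sum>u\<in>A. d u y1' + 1)" by (rule sum_distrib_left[symmetric])
  also have "(\<Sum>u\<in>A. d u y1' + 1) = (\<Sum>u\<in>A. d u y1') + (\<Sum>u\<in>A. (1::nat))" by (rule sum.distrib)
  also have "\<dots> = DB + card A" unfolding DB_def by simp
  also have "(\<Sum>u\<in>L. \<Sum>v\<in>V'. d' u v) = (\<Sum>u\<in>L. DB + card A + 2 * (m - 1))"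
    using rowL by (rule sum.cong[OF refl])
  also have "\<dots> = m * (DB + card A + 2 * (m - 1))" using cardL' by simp
  finally show ?thesis by (simp add: algebra_simps)
qed

lemma cross: "u \<in> A \<Longrightarrow> v \<in> T2 \<Longrightarrow> d u v = d x u + d x v \<and> d v u = d x u + d x v"
proof -
  assume u: "u \<in> A" and v: "v \<in> T2"
  have "d v u = d v x + d x u" using cut[OF T12(3) v] u unfolding A_def by auto
  then show ?thesis using gdist_sym by (metis add.commute)
qed

lemma X_eq: "(\<Sum>u\<in>V. \<Sum>v\<in>V. d u v) = XAA + 2 * (card A * S2 + m * DA) + X22"
proof -
  have cT2: "card T2 = m" using cardT m_def by simp
  have rowA: "(\<Sum>v\<in>V. d u v) = (\<Sum>v\<in>A. d u v) + (m * d x u + S2)" if u: "u \<in> A" for u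
  proof -
    have "(\<Sum>v\<in>T2. d u v) = (\<Sum>v\<in>T2. d x u + d x v)" using cross u by (intro sum.cong) auto
    also have "\<dots> = m * d x u + S2" unfolding S2_def using cT2 by (simp add: sum.distrib)
    finally show ?thesis using splitV[of "\<lambda>v. d u v"] by simp
  qed
  have rowT: "(\<Sum>v\<in>V. d u v) = (card A * d x u + DA) + (\<Sum>v\<in>T2. d u v)" if u: "u \<in> T2" for u
  proof -
    have "(\<Sum>v\<in>A. d u v) = (\<Sum>v\<in>A. d x u + d x v)" using cross u by (intro sum.cong) auto
    also have "\<dots> = card A * d x u + DA" unfolding DA_def by (simp add: sum.distrib)
    finally show ?thesis using splitV[of "\<lambda>v. d u v"] by simp
  qed
  have "(\<Sum>u\<in>V. \<Sum>v\<in>V. d u v) = (\<Sum>u\<in>A. \<Sum>v\<in>V. d u v) + (\<Sum>u\<in>T2. \<Sum>v\<in>V. d u v)"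
    by (rule splitV)
  also have "(\<Sum>u\<in>A. \<Sum>v\<in>V. d u v) = (\<Sum>u\<in>A. (\<Sum>v\<in>A. d u v) + (m * d x u + S2))"
    using rowA by (rule sum.cong[OF refl])
  also have "\<dots> = XAA + (m * DA + card A * S2)"
    unfolding XAA_def DA_def by (simp add: sum.distrib sum_distrib_left[symmetric])
  also have "(\<Sum>u\<in>T2. \<Sum>v\<in>V. d u v) = (\<Sum>u\<in>T2. (card A * d x u + DA) + (\<Sum>v\<in>T2. d u v))"
    using rowT by (rule sum.cong[OF refl])
  also have "\<dots> = (card A * S2 + m * DA) + X22"
    unfolding X22_def S2_def using cT2 by (simp add: sum.distrib sum_distrib_left[symmetric])
  finally show ?thesis by (simp add: algebra_simps)
qed

lemma DA_eq: "DA = (\<Sum>v\<in>T1. d x v) + DR"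
  unfolding DA_def DR_def R_def using sum.subset_diff[of T1 A "\<lambda>u. d x u"] T1A finA by simp

lemma DB_eq: "DB = (\<Sum>v\<in>T1. d v y1') + card R * q + DR"
proof -
  have "DB = (\<Sum>u\<in>R. d u y1') + (\<Sum>v\<in>T1. d v y1')"
    unfolding DB_def R_def using sum.subset_diff[of T1 A "\<lambda>u. d u y1'"] T1A finA by simp
  moreover have "(\<Sum>u\<in>R. d u y1') = (\<Sum>u\<in>R. q + d x u)"
  proof (intro sum.cong refl)
    fix u assume u: "u \<in> R"
    then have "u \<in> V" "u \<notin> T1" unfolding R_def A_def by auto
    then have "d y1' u = d y1' x + d x u" using cut[OF T12(2) B1.bC] by blast
    moreover have "d y1' x = q" using gdist_sym q_def B1.q_def by metis
    ultimately show "d u y1' = q + d x u" using gdist_sym by metis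
  qed
  moreover have "(\<Sum>u\<in>R. q + d x u) = card R * q + DR" unfolding DR_def by (simp add: sum.distrib)
  ultimately show ?thesis by simp
qed

lemma cards: "card A + m = card V" "card R + m = card A"
proof -
  have "card A = card V - card T2" unfolding A_def using B2.CV finV by (simp add: card_Diff_subset finite_subset)
  moreover have "card T2 \<le> card V" using B2.CV finV by (simp add: card_mono)
  ultimately show "card A + m = card V" using cardT m_def by simp
  have "card R = card A - card T1" unfolding R_def using T1A finA by (simp add: card_Diff_subset finite_subset)
  moreover have "card T1 \<le> card A" using T1A finA by (simp add: card_mono)
  ultimately show "card R + m = card A" using cardT m_def by simp
qed

lemma tpos: "t \<ge> 1"
proof -
  have "y1 \<in> B1.LC" unfolding B1.LC_def using y1 by simp
  then have "B1.LC \<noteq> {}" by blast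
  then show ?thesis unfolding t_def B1.t_def using B1.finLC by (simp add: Suc_leI card_gt_0_iff)
qed

lemma key: "3 * (int (\<Sum>u\<in>V'. \<Sum>v\<in>V'. d' u v) - int (\<Sum>u\<in>V. \<Sum>v\<in>V. d u v))
   = int q * ((int q + 1) * (3 * int (card V) + 2 * int q - 5) - 12 * (int m)^2)"
proof -
  define S where "S = (\<Sum>j<q. q - j)"
  define Sj where "Sj = (\<Sum>j<q. j)"
  define Sj1 where "Sj1 = (\<Sum>j<q. j + 1)"
  define Sdd where "Sdd = (\<Sum>i<q. \<Sum>j<q. dd i j)"
  have e1: "2 * int S = int q * (int q + 1)" using sum_qj[of q] unfolding S_def by (metis of_nat_mult of_nat_numeral of_nat_Suc Suc_eq_plus1 of_nat_add of_nat_1)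
  have e2: "2 * int Sj + int q = int q * int q" using sum_j[of q] unfolding Sj_def by (metis of_nat_mult of_nat_numeral of_nat_add)
  have e3: "2 * int Sj1 = int q * (int q + 1)" using sum_j1[of q] unfolding Sj1_def by (metis of_nat_mult of_nat_numeral of_nat_Suc Suc_eq_plus1 of_nat_add of_nat_1)
  have e4: "3 * int Sdd + int q = int q ^ 3" using sum_dd[of q] unfolding Sdd_def by (metis of_nat_mult of_nat_numeral of_nat_add of_nat_power)
  have S1: "(\<Sum>v\<in>T1. d x v) = S + t * (q + 1)" using B1.SX unfolding S_def q_def t_def by simp
  have S2': "S2 = S + t * (q + 1)" using B2.SX qeq teq unfolding S2_def S_def by simp
  have SB1: "(\<Sum>v\<in>T1. d v y1') = Sj + t" using B1.SB unfolding Sj_def q_def t_def by simp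
  have X22': "X22 = Sdd + 2 * (t * Sj1) + t * (2 * (t - 1))"
    using B2.SCC qeq teq unfolding X22_def Sdd_def Sj1_def by simp
  have mpos: "m \<ge> 1" using tpos m_def by simp
  have i1: "int (m - 1) = int m - 1" using mpos by simp
  have i2: "int (t - 1) = int t - 1" using tpos by simp
  have c1: "int (card A) + int m = int (card V)" using cards(1) by linarith
  have c2: "int (card R) + int m = int (card A)" using cards(2) by linarith
  have mm: "int m = int q + int t" using m_def by simp
  have X': "int (\<Sum>u\<in>V'. \<Sum>v\<in>V'. d' u v) = int XAA + 2 * (int m * (int DB + int (card A))) + int m * (2 * (int m - 1))"
    using X'_eq i1 by simp
  have X: "int (\<Sum>u\<in>V. \<Sum>v\<in>V. d u v) = int XAA + 2 * (int (card A) * int S2 + int m * int DA) + int X22"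
    using X_eq by simp
  have DA': "int DA = int S + int t * (int q + 1) + int DR" using DA_eq S1 by (simp add: algebra_simps)
  have DB': "int DB = int Sj + int t + int (card R) * int q + int DR" using DB_eq SB1 by simp
  have S2'': "int S2 = int S + int t * (int q + 1)" using S2' by (simp add: algebra_simps)
  have X22'': "int X22 = int Sdd + 2 * (int t * int Sj1) + int t * (2 * (int t - 1))" using X22' i2 by simp
  show ?thesis unfolding X X' DA' DB' S2'' X22''
    using e1 e2 e3 e4 c1 c2 mm by algebra
qed

end



lemma sqrt_le_iff_sq: assumes "(b::real) \<ge> 0" shows "sqrt a \<le> b \<longleftrightarrow> a \<le> b^2"
proof (cases "a \<ge> 0")
  case True
  have "sqrt (b^2) = b" using assms by simp
  then show ?thesis using real_sqrt_le_iff[of a "b^2"] by simp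
next
  case False
  then have "sqrt a < 0" by simp
  moreover have "a \<le> b^2" using False by (smt (verit) zero_le_power2)
  moreover have "sqrt a \<le> b" using \<open>sqrt a < 0\<close> assms by linarith
  ultimately show ?thesis by simp
qed

lemma div2_le_iff: assumes "even ((a::int) - b)" shows "a div 2 \<le> b div 2 \<longleftrightarrow> a \<le> b"
proof -
  from assms have "2 dvd (a - b)" by simp
  then obtain k where k: "a - b = 2 * k" by (rule dvdE)
  then have "a = b + 2 * k" by simp
  then have "a div 2 = b div 2 + k" by simp
  then show ?thesis using k by linarith
qed

context main begin

lemma final:
  "wiener V' E' \<le> wiener V E \<longleftrightarrow>
   real t \<ge> sqrt (real (q + 1) * (3 * real (card V) + 2 * real (q + 1) - 7) / 12) - real (q + 1) + 1"
proof -
  define X' where "X' = (\<Sum>u\<in>V'. \<Sum>v\<in>V'. d' u v)"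
  define X where "X = (\<Sum>u\<in>V. \<Sum>v\<in>V. d u v)"
  define K where "K = (int q + 1) * (3 * int (card V) + 2 * int q - 5) - 12 * (int m)^2"
  have k: "3 * (int X' - int X) = int q * K" using key unfolding X'_def X_def K_def .
  have ev1: "even (int q * (int q + 1))" by simp
  have "int q * K = int q * (int q + 1) * (3 * int (card V) + 2 * int q - 5) - 12 * int q * (int m)^2"
    unfolding K_def by (simp add: algebra_simps)
  then have "even (int q * K)" using ev1 by simp
  then have "even (3 * (int X' - int X))" using k by simp
  then have ev: "even (int X' - int X)" by simp
  have qpos: "q \<ge> 1" using B1.qpos q_def by simp
  have w1: "wiener V' E' = X' div 2" unfolding wiener_def X'_def ..
  have w2: "wiener V E = X div 2" unfolding wiener_def X_def ..
  have "wiener V' E' \<le> wiener V E \<longleftrightarrow> int (X' div 2) \<le> int (X div 2)" unfolding w1 w2 by linarith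
  also have "\<dots> \<longleftrightarrow> int X' div 2 \<le> int X div 2" by (simp add: zdiv_int)
  also have "\<dots> \<longleftrightarrow> int X' \<le> int X" using div2_le_iff[OF ev] .
  also have "\<dots> \<longleftrightarrow> 3 * (int X' - int X) \<le> 0" by auto
  also have "\<dots> \<longleftrightarrow> int q * K \<le> 0" by (simp only: k)
  also have "\<dots> \<longleftrightarrow> K \<le> 0" using qpos by (simp add: mult_le_0_iff)
  also have "\<dots> \<longleftrightarrow> real (q + 1) * (3 * real (card V) + 2 * real (q + 1) - 7) \<le> 12 * (real t + real q)^2"
  proof -
    have "K \<le> 0 \<longleftrightarrow> real_of_int K \<le> 0" by simp
    moreover have "real_of_int K = real (q + 1) * (3 * real (card V) + 2 * real (q + 1) - 7) - 12 * (real t + real q)^2"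
      unfolding K_def m_def by (simp add: algebra_simps)
    ultimately show ?thesis by simp
  qed
  also have "\<dots> \<longleftrightarrow> sqrt (real (q + 1) * (3 * real (card V) + 2 * real (q + 1) - 7) / 12) \<le> real t + real q"
    using sqrt_le_iff_sq[of "real t + real q"] by (simp add: mult.commute)
  also have "\<dots> \<longleftrightarrow> real t \<ge> sqrt (real (q + 1) * (3 * real (card V) + 2 * real (q + 1) - 7) / 12) - real (q + 1) + 1"
    by (simp add: diff_le_eq add.commute)
  finally show ?thesis .
qed

lemma dy1: "d x y1 = q + 1" using B1.y_dist q_def by simp

lemma tcard: "card {y \<in> T1. is_leaf V E y} = t" unfolding t_def B1.t_def B1.LC_def ..

lemma final2: "wiener (move_verts V T2 L) (move_edges E T2 y1' L) \<le> wiener V E \<longleftrightarrow>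
   real (card {y \<in> T1. is_leaf V E y}) \<ge>
   sqrt (real (gdist V E x y1) * (3 * real (card V) + 2 * real (gdist V E x y1) - 7) / 12)
   - real (gdist V E x y1) + 1"
  using final by (simp only: V'_def E'_def dy1 tcard)

end

theorem mainTheorem6:
  fixes V :: "'a set" and E :: "'a set set" and x y1 y2 y1' :: 'a
    and T1 T2 L :: "'a set"
  assumes "max_wiener_tree V E"
    and "is_special V E x"
    and "special_pair V E x T1 T2"
    and "y1 \<in> T1" and "is_leaf V E y1"
    and "y2 \<in> T2" and "is_leaf V E y2"
    and "{y1, y1'} \<in> E"
    and "gdist V E x y1 = gdist V E x y2"
    and "finite L" and "L \<inter> (V - T2) = {}" and "card L = card T2"
    and "card {y \<in> T1. is_leaf V E y} = card {y \<in> T2. is_leaf V E y}"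
  shows "wiener (move_verts V T2 L) (move_edges E T2 y1' L) \<le> wiener V E
     \<longleftrightarrow> real (card {y \<in> T1. is_leaf V E y}) \<ge>
         sqrt (real (gdist V E x y1) * (3 * real (card V) + 2 * real (gdist V E x y1) - 7) / 12)
         - real (gdist V E x y1) + 1"
proof -
  have T: "is_tree V E" using assms(1) unfolding max_wiener_tree_def by blast
  have xV: "x \<in> V" and dg: "degree V E x \<ge> 3" using assms(2) unfolding is_special_def by auto
  interpret M: main V E x T1 T2 L y1 y2 y1'
    by unfold_locales (use T xV dg assms in auto)
  show ?thesis by (rule M.final2)
qed

end
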